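(* Let $K,d,S,N$ be positive integers with $S+2\le N\le d(K-1)+S$, let $C\triangleq d(K-1)+S+1-N$, let $\boldsymbol{\mathcal{N}}=\{\mathcal{N}_g:g\in[G]\}$ be a pre-specified non-straggler pattern with intersection $\mathcal{I}=\bigcap_{g\in[G]}\mathcal{N}_g$, $I=|\mathcal{I}|$, and $L\triangleq N-S-I$. Let $\boldsymbol{w}\in\mathbb{C}^K$ with all $w_k\neq0$. Define $$I^*=\begin{cases}\lfloor (K-1)/2\rfloor+1, & d=1,\\ (d-1)(K-1)+1, & d\ge 2.\end{cases}$$ Then for a fixed generic pairwise distinct set of data points $\{\alpha_k\in\mathbb{C}:k\in[K]\}$ (i.e. chosen outside a proper algebraic variety of $\mathbb{C}^K$ determined by $K,N,d,S,\boldsymbol{w}$): (1) There exist pairwise distinct values $\{\beta_n:n\in\mathcal{I}\}\subseteq\mathbb{C}$ with $\{\beta_n:n\in\mathcal{I}\}\cap\{\alpha_k:k\in[K]\}=\emptyset$ such that $$\sum_{k=0}^{K-1}w_k\,P_{\mathcal{I}}(\alpha_k)\,\alpha_k^j=0\ \text{ for all } j\in[C+L],\qquad P_{\mathcal{I}}(z)\triangleq\prod_{n\in\mathcal{I}}(z-\beta_n),$$ if and only if $I\ge I^*$. (2) If $I\ge I^*$, then there exist pairwise distinct evaluation points $\{\beta_n:n\in[N]\}$ with $\{\alpha_k:k\in[K]\}\cap\{\beta_n:n\in[N]\}=\emptyset$ such that $\sum_{k=0}^{K-1}w_kP_g(\alpha_k)\alpha_k^j=0$ for all $j\in[C]$,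 $g\in[G]$, where $P_g(z)\triangleq\prod_{n\in\mathcal{N}_g}(z-\beta_n)$; hence the CPA scheme with these points is feasible over $\boldsymbol{\mathcal{N}}$.
   Context: Notation: for a positive integer $m$, $[m]=\{0,1,\dots,m-1\}$. A master and $N$ workers indexed by $[N]$. Given $K$ data matrices $\boldsymbol{X}_k\in\mathbb{C}^{q\times v}$, a polynomial $F$ of degree $d$ acting entry-wise, and weights $w_k\neq0$, the goal is $\boldsymbol{Y}=\sum_{k=0}^{K-1}w_kF(\boldsymbol{X}_k)$. A non-straggler pattern is a collection $\boldsymbol{\mathcal{N}}=\{\mathcal{N}_g:g\in[G]\}$ of subsets of $[N]$ each of cardinality $N-S$. A CPA scheme: the master uses pairwise distinct data points $\alpha_k$ and the encoder polynomial $E(z)$ of degree at most $K-1$ with $E(\alpha_k)=\boldsymbol{X}_k$, pairwise distinct evaluation points $\beta_n$ (disjoint from the $\alpha_k$), sends $E(\beta_n)$ to worker $n$, who returns $F(E(\beta_n))$; on receiving responses from $\mathcal{N}\in\boldsymbol{\mathcal{N}}$, the master interpolates $D(z)$ of degree at most $N-S-1$ with $D(\beta_n)=F(E(\beta_n))$ for $n\in\mathcal{N}$ and outputs $\widehat{\boldsymbol{Y}}(\mathcal{N})=\sum_kw_kD(\alpha_k)$. The scheme is feasible over $\boldsymbol{\mathcal{N}}$ if $\widehat{\boldsymbol{Y}}(\mathcal{N})=\boldsymbol{Y}$ for all $\mathcal{N}\in\boldsymbol{\mathcal{N}}$ (for all data matrices). *)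

theory Defs
  imports Complex_Main "HOL-Computational_Algebra.Polynomial"
begin

definition exps :: "nat \<Rightarrow> nat \<Rightarrow> (nat \<Rightarrow> nat) set" where
  "exps K D = {e. (\<forall>k<K. e k \<le> D) \<and> (\<forall>k. K \<le> k \<longrightarrow> e k = 0)}"

definition mpoly_eval :: "nat \<Rightarrow> nat \<Rightarrow> ((nat \<Rightarrow> nat) \<Rightarrow> complex) \<Rightarrow> (nat \<Rightarrow> complex) \<Rightarrow> complex" where
  "mpoly_eval K D c a = (\<Sum>e\<in>exps K D. c e * (\<Prod>k<K. a k ^ e k))"

text \<open>A nonzero polynomial (some coefficient is nonzero); its zero set is a proper variety.\<close>
definition mpoly_nonzero :: "nat \<Rightarrow> nat \<Rightarrow> ((nat \<Rightarrow> nat) \<Rightarrow> complex) \<Rightarrow> bool" where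
  "mpoly_nonzero K D c = (\<exists>e\<in>exps K D. c e \<noteq> 0)"

definition nonstraggler_pattern :: "nat \<Rightarrow> nat \<Rightarrow> nat \<Rightarrow> (nat \<Rightarrow> nat set) \<Rightarrow> bool" where
  "nonstraggler_pattern N S G Ns = (G \<ge> 1 \<and> (\<forall>g<G. Ns g \<subseteq> {..<N} \<and> card (Ns g) = N - S))"

definition pattern_inter :: "nat \<Rightarrow> (nat \<Rightarrow> nat set) \<Rightarrow> nat set" where
  "pattern_inter G Ns = (\<Inter>g\<in>{..<G}. Ns g)"

definition Istar :: "nat \<Rightarrow> nat \<Rightarrow> nat" where
  "Istar K d = (if d = 1 then (K - 1) div 2 + 1 else (d - 1) * (K - 1) + 1)"

definition lag :: "(nat \<Rightarrow> complex) \<Rightarrow> nat set \<Rightarrow> nat \<Rightarrow> complex \<Rightarrow> complex" where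
  "lag pts A n z = (\<Prod>m\<in>A - {n}. (z - pts m) / (pts n - pts m))"

text \<open>Encoder: the unique polynomial of degree at most K-1 (entry-wise) with E(alpha_k) = X_k.
  Data matrices are functions from entry positions to complex numbers.\<close>
definition encoder :: "nat \<Rightarrow> (nat \<Rightarrow> complex) \<Rightarrow> (nat \<Rightarrow> 'e \<Rightarrow> complex) \<Rightarrow> complex \<Rightarrow> 'e \<Rightarrow> complex" where
  "encoder K \<alpha> X z e = (\<Sum>k<K. X k e * lag \<alpha> {..<K} k z)"

definition decoder :: "nat \<Rightarrow> (nat \<Rightarrow> complex) \<Rightarrow> (nat \<Rightarrow> complex) \<Rightarrow> complex poly
     \<Rightarrow> (nat \<Rightarrow> 'e \<Rightarrow> complex) \<Rightarrow> nat set \<Rightarrow> complex \<Rightarrow> 'e \<Rightarrow> complex" where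
  "decoder K \<alpha> \<beta> F X Nset z e =
     (\<Sum>n\<in>Nset. poly F (encoder K \<alpha> X (\<beta> n) e) * lag \<beta> Nset n z)"

definition cpa_output :: "nat \<Rightarrow> (nat \<Rightarrow> complex) \<Rightarrow> (nat \<Rightarrow> complex) \<Rightarrow> (nat \<Rightarrow> complex)
     \<Rightarrow> complex poly \<Rightarrow> (nat \<Rightarrow> 'e \<Rightarrow> complex) \<Rightarrow> nat set \<Rightarrow> 'e \<Rightarrow> complex" where
  "cpa_output K w \<alpha> \<beta> F X Nset e = (\<Sum>k<K. w k * decoder K \<alpha> \<beta> F X Nset (\<alpha> k) e)"

definition target :: "nat \<Rightarrow> (nat \<Rightarrow> complex) \<Rightarrow> complex poly \<Rightarrow> (nat \<Rightarrow> 'e \<Rightarrow> complex) \<Rightarrow> 'e \<Rightarrow> complex" where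
  "target K w F X e = (\<Sum>k<K. w k * poly F (X k e))"

text \<open>Feasibility over the pattern, for every polynomial F of degree d and all data matrices
  (matrices are represented as functions on entry positions (i,j)).\<close>
definition cpa_feasible :: "nat \<Rightarrow> nat \<Rightarrow> (nat \<Rightarrow> complex) \<Rightarrow> (nat \<Rightarrow> complex) \<Rightarrow> (nat \<Rightarrow> complex)
     \<Rightarrow> nat \<Rightarrow> (nat \<Rightarrow> nat set) \<Rightarrow> bool" where
  "cpa_feasible K d w \<alpha> \<beta> G Ns =
     (\<forall>F :: complex poly. degree F = d \<longrightarrow>
       (\<forall>X :: nat \<Rightarrow> nat \<times> nat \<Rightarrow> complex. \<forall>g<G. \<forall>e.
          cpa_output K w \<alpha> \<beta> F X (Ns g) e = target K w F X e))"

end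

theory Submission
  imports Defs "Jordan_Normal_Form.Determinant" "HOL-Computational_Algebra.Fundamental_Theorem_Algebra"
begin


inductive mpf :: "nat \<Rightarrow> ((nat \<Rightarrow> complex) \<Rightarrow> complex) \<Rightarrow> bool" for K where
  mpf_const: "mpf K (\<lambda>a. c)"
| mpf_var: "k < K \<Longrightarrow> mpf K (\<lambda>a. a k)"
| mpf_add: "mpf K f \<Longrightarrow> mpf K g \<Longrightarrow> mpf K (\<lambda>a. f a + g a)"
| mpf_mult: "mpf K f \<Longrightarrow> mpf K g \<Longrightarrow> mpf K (\<lambda>a. f a * g a)"

lemma mpf_minus: "mpf K f \<Longrightarrow> mpf K (\<lambda>a. - f a)"
  using mpf_mult[OF mpf_const[of K "-1"]] by simp

lemma mpf_diff: "mpf K f \<Longrightarrow> mpf K g \<Longrightarrow> mpf K (\<lambda>a. f a - g a)"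
  using mpf_add[OF _ mpf_minus] by simp

lemma mpf_sum: "finite S \<Longrightarrow> (\<And>i. i \<in> S \<Longrightarrow> mpf K (f i)) \<Longrightarrow> mpf K (\<lambda>a. \<Sum>i\<in>S. f i a)"
proof (induction S rule: finite_induct)
  case empty then show ?case using mpf_const[of K 0] by simp
next
  case (insert x F) then show ?case by (simp add: mpf_add)
qed

lemma mpf_prod: "finite S \<Longrightarrow> (\<And>i. i \<in> S \<Longrightarrow> mpf K (f i)) \<Longrightarrow> mpf K (\<lambda>a. \<Prod>i\<in>S. f i a)"
proof (induction S rule: finite_induct)
  case empty then show ?case using mpf_const[of K 1] by simp
next
  case (insert x F) then show ?case by (simp add: mpf_mult)
qed

lemma mpf_power: "mpf K f \<Longrightarrow> mpf K (\<lambda>a. f a ^ n)"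
  by (induction n) (auto intro: mpf_mult mpf_const)

lemma mpf_if: "mpf K f \<Longrightarrow> mpf K g \<Longrightarrow> mpf K (\<lambda>a. if b then f a else g a)"
  by (cases b) auto

lemma mpf_det:
  assumes "\<And>a. A a \<in> carrier_mat n n" "\<And>i j. i < n \<Longrightarrow> j < n \<Longrightarrow> mpf K (\<lambda>a. A a $$ (i,j))"
  shows "mpf K (\<lambda>a. det (A a))"
proof -
  have "mpf K (\<lambda>a. \<Sum> p \<in> {p. p permutes {0 ..< n}}. signof p * (\<Prod> i = 0 ..< n. A a $$ (i, p i)))"
  proof (rule mpf_sum)
    show "finite {p. p permutes {0 ..< n}}" by (simp add: finite_permutations)
  next
    fix p assume "p \<in> {p. p permutes {0 ..< n}}"
    then have p: "p permutes {0..<n}" by simp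
    have "p i < n" if "i < n" for i using p that permutes_in_image by fastforce
    then show "mpf K (\<lambda>a. signof p * (\<Prod> i = 0 ..< n. A a $$ (i, p i)))"
      by (intro mpf_mult mpf_const mpf_prod) (auto intro: assms)
  qed
  then show ?thesis using det_def'[OF assms(1)] by simp
qed

section \<open>Representation as explicit coefficient polynomial\<close>

lemma finite_exps: "finite (exps K D)"
proof -
  have "exps K D = {f. \<forall>x. (x \<in> {..<K} \<longrightarrow> f x \<in> {..D}) \<and> (x \<notin> {..<K} \<longrightarrow> f x = 0)}"
    unfolding exps_def by auto
  then show ?thesis using finite_set_of_finite_funs[of "{..<K}" "{..D}" 0] by simp
qed

lemma exps_mono: "D \<le> D' \<Longrightarrow> exps K D \<subseteq> exps K D'"
  unfolding exps_def by auto

definition mrep :: "nat \<Rightarrow> ((nat \<Rightarrow> complex) \<Rightarrow> complex) \<Rightarrow> bool" where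
  "mrep K f = (\<exists>D c. \<forall>a. f a = mpoly_eval K D c a)"

lemma mrep_lift:
  assumes "\<forall>a. f a = mpoly_eval K D c a" "D \<le> D'"
  shows "\<exists>c'. \<forall>a. f a = mpoly_eval K D' c' a"
proof -
  define c' where "c' e = (if e \<in> exps K D then c e else 0)" for e
  have "mpoly_eval K D' c' a = mpoly_eval K D c a" for a
  proof -
    have "mpoly_eval K D' c' a = (\<Sum>e\<in>exps K D. c' e * (\<Prod>k<K. a k ^ e k))"
      unfolding mpoly_eval_def
      by (rule sum.mono_neutral_right) (use finite_exps exps_mono[OF assms(2)] in \<open>auto simp: c'_def\<close>)
    also have "\<dots> = mpoly_eval K D c a" unfolding mpoly_eval_def c'_def by simp
    finally show ?thesis .
  qed
  then show ?thesis using assms by metis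
qed

lemma mrep_add:
  assumes "mrep K f" "mrep K g" shows "mrep K (\<lambda>a. f a + g a)"
proof -
  obtain D1 c1 D2 c2 where 1: "\<forall>a. f a = mpoly_eval K D1 c1 a" and 2: "\<forall>a. g a = mpoly_eval K D2 c2 a"
    using assms unfolding mrep_def by blast
  obtain c1' where h1: "\<forall>a. f a = mpoly_eval K (max D1 D2) c1' a" using mrep_lift[OF 1, of "max D1 D2"] by auto
  obtain c2' where h2: "\<forall>a. g a = mpoly_eval K (max D1 D2) c2' a" using mrep_lift[OF 2, of "max D1 D2"] by auto
  have "f a + g a = mpoly_eval K (max D1 D2) (\<lambda>e. c1' e + c2' e) a" for a
    using h1 h2 unfolding mpoly_eval_def by (simp add: sum.distrib algebra_simps)
  then show ?thesis unfolding mrep_def by blast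
qed

lemma exps_add: "e1 \<in> exps K D1 \<Longrightarrow> e2 \<in> exps K D2 \<Longrightarrow> (\<lambda>k. e1 k + e2 k) \<in> exps K (D1 + D2)"
  unfolding exps_def by (auto simp: add_mono)

lemma mrep_mult:
  assumes "mrep K f" "mrep K g" shows "mrep K (\<lambda>a. f a * g a)"
proof -
  obtain D1 c1 D2 c2 where 1: "\<forall>a. f a = mpoly_eval K D1 c1 a" and 2: "\<forall>a. g a = mpoly_eval K D2 c2 a"
    using assms unfolding mrep_def by blast
  define S where "S = exps K D1 \<times> exps K D2"
  define pl where "pl = (\<lambda>(e1::nat\<Rightarrow>nat, e2::nat\<Rightarrow>nat). (\<lambda>k. e1 k + e2 k))"
  define c where "c e = (\<Sum>x\<in>{x\<in>S. pl x = e}. c1 (fst x) * c2 (snd x))" for e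
  have fS: "finite S" unfolding S_def using finite_exps by simp
  have "f a * g a = mpoly_eval K (D1+D2) c a" for a
  proof -
    have "f a * g a = (\<Sum>x\<in>S. (c1 (fst x) * (\<Prod>k<K. a k ^ fst x k)) * (c2 (snd x) * (\<Prod>k<K. a k ^ snd x k)))"
      using 1 2 unfolding mpoly_eval_def S_def by (simp add: sum_product sum.cartesian_product case_prod_beta)
    also have "\<dots> = (\<Sum>x\<in>S. c1 (fst x) * c2 (snd x) * (\<Prod>k<K. a k ^ pl x k))"
      by (intro sum.cong refl) (auto simp: pl_def power_add prod.distrib)
    also have "\<dots> = (\<Sum>e\<in>exps K (D1+D2). \<Sum>x\<in>{x\<in>S. pl x = e}. c1 (fst x) * c2 (snd x) * (\<Prod>k<K. a k ^ pl x k))"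
      by (rule sum.group[symmetric]) (use fS finite_exps exps_add in \<open>auto simp: S_def pl_def\<close>)
    also have "\<dots> = (\<Sum>e\<in>exps K (D1+D2). c e * (\<Prod>k<K. a k ^ e k))"
      unfolding c_def sum_distrib_right by (intro sum.cong refl) auto
    finally show ?thesis unfolding mpoly_eval_def .
  qed
  then show ?thesis unfolding mrep_def by blast
qed

lemma mpf_mrep: "mpf K f \<Longrightarrow> mrep K f"
proof (induction rule: mpf.induct)
  case (mpf_const c)
  define z :: "nat \<Rightarrow> nat" where "z = (\<lambda>_. 0)"
  have ex: "exps K 0 = {z}" unfolding exps_def z_def by (auto simp: fun_eq_iff) (metis not_le)
  have "c = mpoly_eval K 0 (\<lambda>e. c) a" for a unfolding mpoly_eval_def ex z_def by simp
  then show ?case unfolding mrep_def by blast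
next
  case (mpf_var k)
  define ek :: "nat \<Rightarrow> nat" where "ek = (\<lambda>i. if i = k then 1 else 0)"
  have ekin: "ek \<in> exps K 1" unfolding exps_def ek_def using mpf_var by auto
  have "a k = mpoly_eval K 1 (\<lambda>e. if e = ek then 1 else 0) a" for a
  proof -
    have "mpoly_eval K 1 (\<lambda>e. if e = ek then 1 else 0) a = (\<Prod>i<K. a i ^ ek i)"
    proof -
      have "mpoly_eval K 1 (\<lambda>e. if e = ek then 1 else 0) a = (\<Sum>e\<in>exps K 1. if e = ek then (\<Prod>i<K. a i ^ e i) else 0)"
        unfolding mpoly_eval_def by (intro sum.cong refl) auto
      also have "\<dots> = (\<Prod>i<K. a i ^ ek i)" using ekin finite_exps[of K 1] by (simp add: sum.delta')
      finally show ?thesis .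
    qed
    also have "\<dots> = (\<Prod>i<K. if i = k then a k else 1)"
      by (intro prod.cong refl) (auto simp: ek_def)
    also have "\<dots> = a k" using mpf_var by (simp add: prod.delta')
    finally show ?thesis by simp
  qed
  then show ?case unfolding mrep_def by blast
next
  case (mpf_add f g) then show ?case by (intro mrep_add)
next
  case (mpf_mult f g) then show ?case by (intro mrep_mult)
qed

lemma mpoly_nonzero_if: "\<forall>a. f a = mpoly_eval K D c a \<Longrightarrow> f a0 \<noteq> 0 \<Longrightarrow> mpoly_nonzero K D c"
  unfolding mpoly_nonzero_def mpoly_eval_def by (metis (no_types, lifting) mult_eq_0_iff sum.neutral)

section \<open>Restriction to lines\<close>

lemma mpf_line: "mpf K f \<Longrightarrow> \<exists>p. \<forall>t. f (\<lambda>k. a k + t * v k) = poly p t"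
proof (induction rule: mpf.induct)
  case (mpf_const c) then show ?case by (intro exI[of _ "[:c:]"]) simp
next
  case (mpf_var k) then show ?case by (intro exI[of _ "[:a k, v k:]"]) (simp add: algebra_simps)
next
  case (mpf_add f g)
  then obtain p q where "\<forall>t. f (\<lambda>k. a k + t * v k) = poly p t" "\<forall>t. g (\<lambda>k. a k + t * v k) = poly q t" by blast
  then show ?case by (intro exI[of _ "p + q"]) simp
next
  case (mpf_mult f g)
  then obtain p q where "\<forall>t. f (\<lambda>k. a k + t * v k) = poly p t" "\<forall>t. g (\<lambda>k. a k + t * v k) = poly q t" by blast
  then show ?case by (intro exI[of _ "p * q"]) simp
qed

lemma mpf_two_nonzero:
  assumes "mpf K f" "mpf K g" "f a \<noteq> 0" "g b \<noteq> 0"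
  shows "\<exists>x. f x \<noteq> 0 \<and> g x \<noteq> 0"
proof -
  obtain p where p: "\<forall>t. f (\<lambda>k. a k + t * (b k - a k)) = poly p t" using mpf_line[OF assms(1), of a "\<lambda>k. b k - a k"] by blast
  obtain q where q: "\<forall>t. g (\<lambda>k. a k + t * (b k - a k)) = poly q t" using mpf_line[OF assms(2), of a "\<lambda>k. b k - a k"] by blast
  have "poly p 0 \<noteq> 0" using p[rule_format, of 0] assms(3) by simp
  then have p0: "p \<noteq> 0" by auto
  have "poly q 1 \<noteq> 0" using q[rule_format, of 1] assms(4) by simp
  then have q0: "q \<noteq> 0" by auto
  have "p * q \<noteq> 0" using p0 q0 by simp
  then have "finite {t. poly (p*q) t = 0}" by (rule poly_roots_finite)
  moreover have "infinite (UNIV :: complex set)" by (rule infinite_UNIV_char_0)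
  ultimately obtain t where "poly (p*q) t \<noteq> 0"
    by (metis (mono_tags, lifting) UNIV_I mem_Collect_eq subsetI finite_subset)
  then show ?thesis using p q by (intro exI[of _ "\<lambda>k. a k + t * (b k - a k)"]) auto
qed

lemma mpf_prod_nonzero:
  assumes "finite S" "\<And>i. i \<in> S \<Longrightarrow> mpf K (f i)" "\<And>i. i \<in> S \<Longrightarrow> \<exists>a. f i a \<noteq> 0"
  shows "\<exists>a. (\<Prod>i\<in>S. f i a) \<noteq> 0"
  using assms
proof (induction S rule: finite_induct)
  case empty then show ?case by simp
next
  case (insert x F)
  then obtain a where a: "(\<Prod>i\<in>F. f i a) \<noteq> 0" by blast
  obtain b where b: "f x b \<noteq> 0" using insert by blast
  have "mpf K (\<lambda>a. \<Prod>i\<in>F. f i a)" using insert by (intro mpf_prod) auto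
  from mpf_two_nonzero[OF insert.prems(1)[of x] this b a] insert.hyps show ?case by auto
qed




lemma poly_sum_lt: "degree f < n \<Longrightarrow> poly f (x::complex) = (\<Sum>i<n. coeff f i * x ^ i)"
proof -
  assume d: "degree f < n"
  have "poly f x = (\<Sum>i\<le>degree f. coeff f i * x ^ i)" by (rule poly_altdef)
  also have "\<dots> = (\<Sum>i<n. coeff f i * x ^ i)"
    by (rule sum.mono_neutral_left) (use d in \<open>auto simp: coeff_eq_0\<close>)
  finally show ?thesis .
qed

lemma lin_comb:
  assumes "\<forall>j<n. (\<Sum>k\<in>J. u k * a k ^ j) = (0::complex)" "degree f < n"
  shows "(\<Sum>k\<in>J. u k * poly f (a k)) = 0"
proof -
  have "(\<Sum>k\<in>J. u k * poly f (a k)) = (\<Sum>k\<in>J. \<Sum>i<n. coeff f i * (u k * a k ^ i))"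
    using assms(2) by (simp add: poly_sum_lt sum_distrib_left algebra_simps)
  also have "\<dots> = (\<Sum>i<n. coeff f i * (\<Sum>k\<in>J. u k * a k ^ i))"
    by (subst sum.swap) (simp add: sum_distrib_left)
  also have "\<dots> = 0" using assms(1) by simp
  finally show ?thesis .
qed

lemma degree_linear_prod:
  assumes "finite J"
  shows "degree (\<Prod>l\<in>J. [:- b l, (1::complex):]) = card J"
  using assms by (subst degree_prod_sum_eq) auto

lemma monic_linear_prod:
  "lead_coeff (\<Prod>l\<in>J. [:- b l, (1::complex):]) = 1"
  by (simp add: lead_coeff_prod)

lemma dual_vandermonde:
  assumes "finite J" "inj_on a J" "card J \<le> n" "\<forall>j<n. (\<Sum>k\<in>J. u k * a k ^ j) = (0::complex)" "k0 \<in> J"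
  shows "u k0 = 0"
proof -
  define L where "L = (\<Prod>l\<in>J-{k0}. [:- a l, (1::complex):])"
  have "degree L = card (J - {k0})" unfolding L_def using assms(1)
    by (intro degree_linear_prod) simp
  then have "degree L = card J - 1" using assms(1,5) by simp
  moreover have "card J \<ge> 1" using assms(1,5) by (metis card_0_eq empty_iff less_one not_le)
  ultimately have dL: "degree L < n" using assms(3) by linarith
  have "(\<Sum>k\<in>J. u k * poly L (a k)) = 0" by (rule lin_comb[OF assms(4) dL])
  moreover have "(\<Sum>k\<in>J. u k * poly L (a k)) = u k0 * poly L (a k0)"
  proof -
    have z: "poly L (a k) = 0" if "k \<in> J - {k0}" for k
      unfolding L_def poly_prod using that assms(1) by (intro prod_zero) (use that in \<open>auto intro!: bexI[of _ k]\<close>)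
    have "(\<Sum>k\<in>J. u k * poly L (a k)) = u k0 * poly L (a k0) + (\<Sum>k\<in>J-{k0}. u k * poly L (a k))"
      using assms(1,5) by (rule sum.remove)
    also have "(\<Sum>k\<in>J-{k0}. u k * poly L (a k)) = 0" using z by simp
    finally show ?thesis by simp
  qed
  moreover have "poly L (a k0) \<noteq> 0"
  proof -
    have "poly L (a k0) = (\<Prod>l\<in>J-{k0}. a k0 - a l)" unfolding L_def poly_prod by simp
    moreover have "a k0 - a l \<noteq> 0" if "l \<in> J - {k0}" for l
    proof
      assume "a k0 - a l = 0"
      then have "a k0 = a l" by simp
      with assms(2,5) that have "k0 = l" by (meson DiffD1 inj_onD)
      with that show False by simp
    qed
    ultimately show ?thesis using assms(1) by (simp add: prod_zero_iff)
  qed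
  ultimately show ?thesis by simp
qed


definition mom :: "nat \<Rightarrow> (nat \<Rightarrow> complex) \<Rightarrow> (nat \<Rightarrow> complex) \<Rightarrow> nat \<Rightarrow> complex" where
  "mom K u a i = (\<Sum>k<K. u k * a k ^ i)"

definition hk :: "nat \<Rightarrow> (nat \<Rightarrow> complex) \<Rightarrow> (nat \<Rightarrow> complex) \<Rightarrow> nat \<Rightarrow> complex mat" where
  "hk K u a n = mat n n (\<lambda>(i,j). mom K u a (i+j))"

lemma hk_carrier: "hk K u a n \<in> carrier_mat n n" unfolding hk_def by simp

lemma hk_mult: "v \<in> carrier_vec n \<Longrightarrow> j < n \<Longrightarrow> (hk K u a n *\<^sub>v v) $ j = (\<Sum>i<n. mom K u a (j+i) * v $ i)"
  unfolding hk_def by (simp add: scalar_prod_def atLeast0LessThan)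

lemma hk_comp:
  assumes "degree p < n"
  shows "(\<Sum>i<n. mom K u a (j+i) * coeff p i) = (\<Sum>k<K. u k * poly p (a k) * a k ^ j)"
proof -
  have "(\<Sum>i<n. mom K u a (j+i) * coeff p i) = (\<Sum>i<n. \<Sum>k<K. u k * a k ^ j * (coeff p i * a k ^ i))"
    unfolding mom_def by (simp add: sum_distrib_right sum_distrib_left power_add algebra_simps)
  also have "\<dots> = (\<Sum>k<K. u k * a k ^ j * (\<Sum>i<n. coeff p i * a k ^ i))"
    by (subst sum.swap) (simp add: sum_distrib_left)
  also have "\<dots> = (\<Sum>k<K. u k * poly p (a k) * a k ^ j)"
    using assms by (simp add: poly_sum_lt algebra_simps)
  finally show ?thesis .
qed

lemma hk_nd:
  assumes "det (hk K u a n) \<noteq> 0" "degree p < n" "\<forall>j<n. (\<Sum>k<K. u k * poly p (a k) * a k ^ j) = 0"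
  shows "p = 0"
proof -
  define v where "v = vec n (\<lambda>i. coeff p i)"
  have vc: "v \<in> carrier_vec n" unfolding v_def by simp
  have "hk K u a n *\<^sub>v v = 0\<^sub>v n"
  proof (rule eq_vecI)
    fix j assume j: "j < dim_vec (0\<^sub>v n :: complex vec)"
    then have "(hk K u a n *\<^sub>v v) $ j = (\<Sum>i<n. mom K u a (j+i) * coeff p i)"
      using hk_mult[OF vc] by (simp add: v_def)
    also have "\<dots> = 0" using hk_comp[OF assms(2)] assms(3) j by simp
    finally show "(hk K u a n *\<^sub>v v) $ j = 0\<^sub>v n $ j" using j by simp
  qed (simp add: hk_def)
  then have "v = 0\<^sub>v n" using det_0_iff_vec_prod_zero[OF hk_carrier[of K u a n]] assms(1) vc by blast
  then have "coeff p i = 0" for i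
  proof (cases "i < n")
    case True
    then have "v $ i = 0" using \<open>v = 0\<^sub>v n\<close> by simp
    then show ?thesis using True by (simp add: v_def)
  next
    case False then show ?thesis using assms(2) by (simp add: coeff_eq_0)
  qed
  then show ?thesis by (simp add: poly_eqI)
qed

lemma hk_ndc:
  assumes "\<And>p. degree p < n \<Longrightarrow> \<forall>j<n. (\<Sum>k<K. u k * poly p (a k) * a k ^ j) = 0 \<Longrightarrow> p = 0"
  shows "det (hk K u a n) \<noteq> 0"
proof
  assume "det (hk K u a n) = 0"
  then obtain v where v: "v \<in> carrier_vec n" "v \<noteq> 0\<^sub>v n" "hk K u a n *\<^sub>v v = 0\<^sub>v n"
    using det_0_iff_vec_prod_zero[OF hk_carrier[of K u a n]] by blast
  define p where "p = (\<Sum>i<n. monom (v $ i) i)"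
  have cp: "coeff p i = (if i < n then v $ i else 0)" for i
    unfolding p_def by (simp add: coeff_sum)
  have "n \<noteq> 0" using v by auto
  then have dp: "degree p < n" using cp
  proof -
    have "degree p \<le> n - 1" using cp by (intro degree_le) auto
    then show ?thesis using \<open>n \<noteq> 0\<close> by linarith
  qed
  have "\<forall>j<n. (\<Sum>k<K. u k * poly p (a k) * a k ^ j) = 0"
  proof (intro allI impI)
    fix j assume j: "j < n"
    have "(\<Sum>k<K. u k * poly p (a k) * a k ^ j) = (\<Sum>i<n. mom K u a (j+i) * coeff p i)"
      using hk_comp[OF dp] by simp
    also have "\<dots> = (hk K u a n *\<^sub>v v) $ j" using hk_mult[OF v(1) j] cp by simp
    also have "\<dots> = 0" using v(3) j by simp
    finally show "(\<Sum>k<K. u k * poly p (a k) * a k ^ j) = 0" .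
  qed
  then have "p = 0" using assms dp by blast
  then have "v $ i = 0" if "i < n" for i using cp[of i] that by simp
  then have "v = 0\<^sub>v n" using v(1) by (intro eq_vecI) auto
  with v(2) show False by simp
qed


definition qk :: "nat \<Rightarrow> (nat \<Rightarrow> complex) \<Rightarrow> nat \<Rightarrow> complex" where
  "qk K a k = (\<Prod>l\<in>{..<K}-{k}. a k - a l)"

definition Lk :: "nat \<Rightarrow> (nat \<Rightarrow> complex) \<Rightarrow> nat \<Rightarrow> complex poly" where
  "Lk K a k = (\<Prod>l\<in>{..<K}-{k}. [:- a l, 1:])"

lemma qk_nz: "inj_on a {..<K} \<Longrightarrow> k < K \<Longrightarrow> qk K a k \<noteq> 0"
proof -
  assume inj: "inj_on a {..<K}" and k: "k < K"
  have "a k - a l \<noteq> 0" if "l \<in> {..<K}-{k}" for l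
  proof
    assume "a k - a l = 0"
    then have "a k = a l" by simp
    then have "k = l" using inj k that by (metis DiffD1 inj_onD lessThan_iff)
    then show False using that by simp
  qed
  then show ?thesis unfolding qk_def by (simp add: prod_zero_iff)
qed

lemma poly_Lk: "inj_on a {..<K} \<Longrightarrow> k < K \<Longrightarrow> j < K \<Longrightarrow> poly (Lk K a k) (a j) = (if j = k then qk K a k else 0)"
  unfolding Lk_def qk_def poly_prod
  by (auto intro!: prod_zero bexI[of _ j])

lemma degree_Lk: "k < K \<Longrightarrow> degree (Lk K a k) = K - 1"
  unfolding Lk_def by (subst degree_linear_prod) auto

lemma coeff_Lk: "k < K \<Longrightarrow> coeff (Lk K a k) (K - 1) = 1"
  using monic_linear_prod[of a "{..<K}-{k}"] degree_Lk[of k K a] unfolding Lk_def by simp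

lemma lagrange_eq:
  assumes "inj_on a {..<K}" "degree f < K"
  shows "f = (\<Sum>k<K. Polynomial.smult (poly f (a k) / qk K a k) (Lk K a k))"
proof (rule poly_eqI_degree[of "a ` {..<K}"])
  fix x assume "x \<in> a ` {..<K}"
  then obtain j where j: "j < K" "x = a j" by auto
  have "poly (\<Sum>k<K. Polynomial.smult (poly f (a k) / qk K a k) (Lk K a k)) (a j)
      = (\<Sum>k<K. poly f (a k) / qk K a k * (if j = k then qk K a k else 0))"
    by (simp add: poly_sum poly_Lk[OF assms(1) _ j(1)])
  also have "\<dots> = (\<Sum>k<K. if k = j then poly f (a j) else 0)"
    by (intro sum.cong refl) (use qk_nz[OF assms(1) j(1)] in auto)
  also have "\<dots> = poly f (a j)" using j(1) by simp
  finally show "poly f x = poly (\<Sum>k<K. Polynomial.smult (poly f (a k) / qk K a k) (Lk K a k)) x" using j by simp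
next
  have c: "card (a ` {..<K}) = K" using assms(1) by (simp add: card_image)
  show "degree f < card (a ` {..<K})" using c assms(2) by simp
  have "degree (\<Sum>k<K. Polynomial.smult (poly f (a k) / qk K a k) (Lk K a k)) \<le> K - 1"
    by (intro degree_sum_le, simp) (metis degree_Lk degree_smult_le lessThan_iff)
  then show "degree (\<Sum>k<K. Polynomial.smult (poly f (a k) / qk K a k) (Lk K a k)) < card (a ` {..<K})"
    using c assms(2) by linarith
qed

lemma qk_identity:
  assumes "inj_on a {..<K}" "degree f < K - 1"
  shows "(\<Sum>k<K. poly f (a k) / qk K a k) = 0"
proof -
  have "f = (\<Sum>k<K. Polynomial.smult (poly f (a k) / qk K a k) (Lk K a k))"
    using lagrange_eq[OF assms(1)] assms(2) by simp
  then have "coeff f (K-1) = (\<Sum>k<K. poly f (a k) / qk K a k * coeff (Lk K a k) (K - 1))"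
    by (metis (no_types, lifting) coeff_smult coeff_sum sum.cong)
  also have "\<dots> = (\<Sum>k<K. poly f (a k) / qk K a k)" by (intro sum.cong refl) (metis coeff_Lk lessThan_iff mult.right_neutral)
  finally show ?thesis using assms(2) by (simp add: coeff_eq_0)
qed


lemma finite_avoid: "finite (S::complex set) \<Longrightarrow> \<exists>x. x \<notin> S"
  using infinite_UNIV_char_0 by (metis UNIV_I finite_subset subsetI)

lemma exists_P_big:
  fixes a w :: "nat \<Rightarrow> complex"
  assumes inj: "inj_on a {..<K}" and w: "\<forall>k<K. w k \<noteq> 0" and KI: "K \<le> I" and mK: "m \<le> K - 1" and K1: "K \<ge> 1"
  shows "\<exists>P. degree P = I \<and> lead_coeff P = 1 \<and> rsquarefree P \<and> (\<forall>k<K. poly P (a k) \<noteq> 0) \<and>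
             (\<forall>j<m. (\<Sum>k<K. w k * poly P (a k) * a k ^ j) = 0)"
proof -
  define R0 where "R0 = (\<Sum>k<K. Polynomial.smult (1 / (w k * qk K a k * qk K a k)) (Lk K a k))"
  have R0a: "poly R0 (a j) = 1 / (w j * qk K a j)" if j: "j < K" for j
  proof -
    have "poly R0 (a j) = (\<Sum>k<K. 1 / (w k * qk K a k * qk K a k) * (if j = k then qk K a k else 0))"
      unfolding R0_def by (simp add: poly_sum poly_Lk[OF inj _ j])
    also have "\<dots> = (\<Sum>k<K. if k = j then 1 / (w j * qk K a j) else 0)"
      by (intro sum.cong refl) (use qk_nz[OF inj j] in auto)
    also have "\<dots> = 1 / (w j * qk K a j)" using j by simp
    finally show ?thesis .
  qed
  have R0nz: "poly R0 (a j) \<noteq> 0" if "j < K" for j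
    using R0a[OF that] qk_nz[OF inj that] w that by simp
  have dR0: "degree R0 \<le> K - 1" unfolding R0_def
    by (intro degree_sum_le, simp) (metis degree_Lk degree_smult_le lessThan_iff)
  have orth: "(\<Sum>k<K. w k * poly R0 (a k) * a k ^ j) = 0" if "j < K - 1" for j
  proof -
    have "(\<Sum>k<K. w k * poly R0 (a k) * a k ^ j) = (\<Sum>k<K. poly (monom 1 j) (a k) / qk K a k)"
      by (intro sum.cong refl) (use w qk_nz[OF inj] in \<open>auto simp: R0a poly_monom\<close>)
    also have "\<dots> = 0" using that by (intro qk_identity[OF inj]) (simp add: degree_monom_eq)
    finally show ?thesis .
  qed
  have "R0 \<noteq> 0" using R0nz[of 0] K1 by auto
  then have fR: "finite {z. poly R0 z = 0}" by (rule poly_roots_finite)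
  obtain s where s: "s \<notin> a ` {..<K} \<union> {z. poly R0 z = 0}"
    using finite_avoid[of "a ` {..<K} \<union> {z. poly R0 z = 0}"] fR by blast
  define M where "M = (\<Prod>k<K. [:- a k, 1:]) * [:- s, 1:] ^ (I - K)"
  have polyM: "poly M z = (\<Prod>k<K. z - a k) * (z - s) ^ (I - K)" for z
    unfolding M_def by (simp add: poly_prod)
  have Mroot: "z \<in> a ` {..<K} \<or> z = s" if "poly M z = 0" for z
    using that unfolding polyM by (auto simp: prod_zero_iff)
  have Ma: "poly M (a k) = 0" if "k < K" for k unfolding polyM using that
    by (auto intro!: prod_zero bexI[of _ k])
  have degM: "degree M = I" unfolding M_def using KI
    by (simp add: degree_mult_eq degree_linear_prod degree_power_eq)
  have lcM: "lead_coeff M = 1" unfolding M_def by (simp add: lead_coeff_mult lead_coeff_prod lead_coeff_power)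
  have dM: "poly (pderiv M) (a k) \<noteq> 0" if k: "k < K" for k
  proof -
    define Mk where "Mk = Lk K a k * [:- s, 1:] ^ (I - K)"
    have pe: "(\<Prod>k<K. [:- a k, 1:]) = [:- a k, 1:] * Lk K a k"
      unfolding Lk_def using k by (subst prod.remove[of _ k]) auto
    have MM: "M = [:- a k, 1:] * Mk" by (simp only: M_def Mk_def pe mult.assoc)
    have "poly (pderiv M) (a k) = poly Mk (a k)" unfolding MM by (simp only: pderiv_mult) (simp add: pderiv_pCons)
    also have "\<dots> = qk K a k * (a k - s) ^ (I - K)" unfolding Mk_def using poly_Lk[OF inj k k] by simp
    also have "\<dots> \<noteq> 0"
    proof -
      have "a k \<noteq> s" using s k by blast
      then show ?thesis using qk_nz[OF inj k] by simp
    qed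
    finally show ?thesis .
  qed
  define W where "W = M * pderiv R0 - pderiv M * R0"
  have "poly W (a 0) = - poly (pderiv M) (a 0) * poly R0 (a 0)"
    unfolding W_def using Ma[of 0] K1 by simp
  then have "poly W (a 0) \<noteq> 0" using dM[of 0] R0nz[of 0] K1 by simp
  then have "W \<noteq> 0" by auto
  then have fW: "finite {z. poly W z = 0}" by (rule poly_roots_finite)
  obtain t where t: "t \<notin> (\<lambda>z. - poly M z / poly R0 z) ` {z. poly W z = 0} \<union> {0}"
  proof -
    have "finite ((\<lambda>z. - poly M z / poly R0 z) ` {z. poly W z = 0} \<union> {0})" using fW by simp
    then show ?thesis using finite_avoid that by blast
  qed
  define P where "P = M + Polynomial.smult t R0"
  have dtR: "degree (Polynomial.smult t R0) < degree M" using dR0 degM KI K1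
    using degree_smult_le[of t R0] dR0 degM KI K1 by linarith
  have degP: "degree P = I" unfolding P_def using dtR degM by (simp add: degree_add_eq_left)
  have lcP: "lead_coeff P = 1"
  proof -
    have "lead_coeff P = coeff M I + t * coeff R0 I" using degP unfolding P_def by simp
    moreover have "coeff R0 I = 0" using dR0 KI K1 by (intro coeff_eq_0) linarith
    ultimately show ?thesis using lcM degM by simp
  qed
  have t0: "t \<noteq> 0" using t by blast
  have Pa: "poly P (a k) \<noteq> 0" if "k < K" for k
    unfolding P_def using Ma[OF that] R0nz[OF that] t0 by simp
  have orthP: "(\<Sum>k<K. w k * poly P (a k) * a k ^ j) = 0" if "j < m" for j
  proof -
    have "(\<Sum>k<K. w k * poly P (a k) * a k ^ j) = t * (\<Sum>k<K. w k * poly R0 (a k) * a k ^ j)"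
      unfolding P_def by (simp add: Ma sum_distrib_left algebra_simps)
    also have "\<dots> = 0" using orth[of j] that mK by simp
    finally show ?thesis .
  qed
  have sqf: "rsquarefree P"
    unfolding rsquarefree_roots
  proof (intro allI notI)
    fix z assume h: "poly P z = 0 \<and> poly (pderiv P) z = 0"
    have "poly M z + t * poly R0 z = 0" using h unfolding P_def by simp
    then have h1: "poly M z = - t * poly R0 z" by (simp add: eq_neg_iff_add_eq_0)
    have h2: "poly (pderiv M) z = - t * poly (pderiv R0) z"
    proof -
      have "poly (pderiv M) z + t * poly (pderiv R0) z = 0" using h unfolding P_def by (simp add: pderiv_add pderiv_smult)
      then show ?thesis by (simp add: eq_neg_iff_add_eq_0)
    qed
    have Wz: "poly W z = 0" unfolding W_def using h1 h2 by (simp add: algebra_simps)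
    show False
    proof (cases "poly R0 z = 0")
      case True
      then have "poly M z = 0" using h1 by simp
      then have "z \<in> a ` {..<K} \<or> z = s" by (rule Mroot)
      then show False
      proof
        assume "z \<in> a ` {..<K}"
        then obtain k where "k < K" "z = a k" by auto
        then show False using True R0nz by simp
      next
        assume "z = s"
        then show False using True s by simp
      qed
    next
      case False
      then have "t = - poly M z / poly R0 z" using h1 by (simp add: field_simps)
      then have "t \<in> (\<lambda>z. - poly M z / poly R0 z) ` {z. poly W z = 0}" using Wz by blast
      then show False using t by blast
    qed
  qed
  show ?thesis using degP lcP sqf Pa orthP by blast
qed




definition Hm :: "nat \<Rightarrow> (nat \<Rightarrow> complex) \<Rightarrow> nat \<Rightarrow> (nat \<Rightarrow> complex) \<Rightarrow> complex mat" where
  "Hm K w r a = hk K w a r"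

definition bv :: "nat \<Rightarrow> (nat \<Rightarrow> complex) \<Rightarrow> nat \<Rightarrow> (nat \<Rightarrow> complex) \<Rightarrow> complex vec" where
  "bv K w r a = vec r (\<lambda>j. mom K w a (j + r))"

definition ev :: "nat \<Rightarrow> (nat \<Rightarrow> complex) \<Rightarrow> nat \<Rightarrow> (nat \<Rightarrow> complex) \<Rightarrow> complex vec" where
  "ev K w r a = adj_mat (Hm K w r a) *\<^sub>v bv K w r a"

definition ppc :: "nat \<Rightarrow> (nat \<Rightarrow> complex) \<Rightarrow> nat \<Rightarrow> (nat \<Rightarrow> complex) \<Rightarrow> nat \<Rightarrow> complex" where
  "ppc K w r a i = (if i < r then - (ev K w r a $ i) else if i = r then det (Hm K w r a) else 0)"

definition PP :: "nat \<Rightarrow> (nat \<Rightarrow> complex) \<Rightarrow> nat \<Rightarrow> (nat \<Rightarrow> complex) \<Rightarrow> complex poly" where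
  "PP K w r a = (\<Sum>i\<le>r. monom (ppc K w r a i) i)"

lemma coeff_PP: "coeff (PP K w r a) i = ppc K w r a i"
  unfolding PP_def by (simp add: coeff_sum ppc_def)

lemma degree_PP_le: "degree (PP K w r a) \<le> r"
  by (intro degree_le) (simp add: coeff_PP ppc_def)

lemma degree_PP: "det (Hm K w r a) \<noteq> 0 \<Longrightarrow> degree (PP K w r a) = r"
  using degree_PP_le by (metis coeff_PP le_degree ppc_def less_irrefl le_antisym)

lemma Hm_carrier: "Hm K w r a \<in> carrier_mat r r" unfolding Hm_def by (rule hk_carrier)

lemma H_ev: "j < r \<Longrightarrow> (Hm K w r a *\<^sub>v ev K w r a) $ j = det (Hm K w r a) * mom K w a (j + r)"
proof -
  assume j: "j < r"
  let ?H = "Hm K w r a"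
  have c: "?H \<in> carrier_mat r r" "adj_mat ?H \<in> carrier_mat r r" "bv K w r a \<in> carrier_vec r"
    using Hm_carrier adj_mat(1)[OF Hm_carrier] by (auto simp: bv_def)
  have "?H *\<^sub>v ev K w r a = (?H * adj_mat ?H) *\<^sub>v bv K w r a"
    unfolding ev_def using c by simp
  also have "\<dots> = (det ?H \<cdot>\<^sub>m 1\<^sub>m r) *\<^sub>v bv K w r a" using adj_mat(2)[OF Hm_carrier] by simp
  finally have "(?H *\<^sub>v ev K w r a) $ j = ((det ?H \<cdot>\<^sub>m 1\<^sub>m r) *\<^sub>v bv K w r a) $ j" by simp
  also have "\<dots> = (\<Sum>i\<in>{0..<r}. det ?H * (if i = j then 1 else 0) * bv K w r a $ i)"
    using j by (simp add: scalar_prod_def bv_def)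
  also have "\<dots> = (\<Sum>i\<in>{0..<r}. if i = j then det ?H * bv K w r a $ i else 0)"
    by (intro sum.cong) auto
  also have "\<dots> = det ?H * bv K w r a $ j" using j by simp
  finally show ?thesis using j by (simp add: bv_def)
qed

lemma PP_orth:
  assumes j: "j < r"
  shows "(\<Sum>k<K. w k * poly (PP K w r a) (a k) * a k ^ j) = 0"
proof -
  have d: "degree (PP K w r a) < Suc r" using degree_PP_le[of K w r a] by simp
  have e1: "(\<Sum>k<K. w k * poly (PP K w r a) (a k) * a k ^ j) = (\<Sum>i<Suc r. mom K w a (j+i) * ppc K w r a i)"
    using hk_comp[OF d, of K w a j] by (simp add: coeff_PP)
  have e2: "(\<Sum>i<Suc r. mom K w a (j+i) * ppc K w r a i) = (\<Sum>i<r. mom K w a (j+i) * ppc K w r a i) + mom K w a (j+r) * det (Hm K w r a)"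
    by (simp add: ppc_def)
  have e3: "(\<Sum>i<r. mom K w a (j+i) * ppc K w r a i) = - (\<Sum>i<r. mom K w a (j+i) * ev K w r a $ i)"
    by (simp add: ppc_def sum_negf[symmetric])
  have ec: "ev K w r a \<in> carrier_vec r" unfolding ev_def by (rule mult_mat_vec_carrier[OF adj_mat(1)[OF Hm_carrier[of K w r a]]]) (simp add: bv_def)
  have e4: "(\<Sum>i<r. mom K w a (j+i) * ev K w r a $ i) = (Hm K w r a *\<^sub>v ev K w r a) $ j"
    using hk_mult[OF ec j, of K w a] by (simp add: Hm_def)
  have e5: "(Hm K w r a *\<^sub>v ev K w r a) $ j = det (Hm K w r a) * mom K w a (j + r)" using H_ev[OF j] .
  show ?thesis unfolding e1 e2 e3 e4 e5 by (simp add: mult.commute)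
qed


lemma PP_nz: "det (Hm K w r a) \<noteq> 0 \<Longrightarrow> PP K w r a \<noteq> 0"
  by (metis coeff_PP coeff_0 ppc_def less_irrefl)

lemma lead_PP: "det (Hm K w r a) \<noteq> 0 \<Longrightarrow> lead_coeff (PP K w r a) = det (Hm K w r a)"
  using degree_PP[of K w r a] by (simp add: coeff_PP ppc_def)

lemma PP_nonroot:
  assumes H: "det (Hm K w r a) \<noteq> 0" and Hm: "det (hk K (\<lambda>k. w k * (a k - a m)) a r) \<noteq> 0"
  shows "poly (PP K w r a) (a m) \<noteq> 0"
proof
  assume "poly (PP K w r a) (a m) = 0"
  then obtain R where R: "PP K w r a = [:- a m, 1:] * R" using poly_eq_0_iff_dvd by (metis dvdE)
  have "R \<noteq> 0" using R PP_nz[OF H] by auto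
  then have "degree (PP K w r a) = Suc (degree R)" unfolding R by (subst degree_mult_eq) auto
  then have dR: "degree R < r" using degree_PP[OF H] by simp
  have "\<forall>j<r. (\<Sum>k<K. w k * (a k - a m) * poly R (a k) * a k ^ j) = 0"
  proof (intro allI impI)
    fix j assume j: "j < r"
    have "(\<Sum>k<K. w k * (a k - a m) * poly R (a k) * a k ^ j) = (\<Sum>k<K. w k * poly (PP K w r a) (a k) * a k ^ j)"
      unfolding R by (intro sum.cong refl) (simp add: algebra_simps)
    also have "\<dots> = 0" using PP_orth[OF j] .
    finally show "(\<Sum>k<K. w k * (a k - a m) * poly R (a k) * a k ^ j) = 0" .
  qed
  then have "R = 0" using hk_nd[OF Hm dR] by simp
  with \<open>R \<noteq> 0\<close> show False by simp
qed

lemma NE_hankel: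
  assumes "det (hk K w a (Suc I)) \<noteq> 0" "degree P = I" "lead_coeff P = 1"
    "\<forall>j<Suc I. (\<Sum>k<K. w k * poly P (a k) * a k ^ j) = 0"
  shows False
proof -
  have "P = 0" using hk_nd[OF assms(1) _ assms(4)] assms(2) by simp
  then show False using assms(3) by simp
qed

lemma NE_vander:
  fixes a w :: "nat \<Rightarrow> complex"
  assumes "inj_on a {..<K}" "\<forall>k<K. w k \<noteq> 0" "\<forall>k<K. poly P (a k) \<noteq> 0" "K \<ge> 1"
    "\<forall>j<K. (\<Sum>k<K. w k * poly P (a k) * a k ^ j) = 0"
  shows False
proof -
  have "w 0 * poly P (a 0) = 0"
    by (rule dual_vandermonde[of "{..<K}" a K "\<lambda>k. w k * poly P (a k)"]) (use assms in auto)
  then show False using assms by auto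
qed

lemma lin_prod_pderiv:
  assumes "finite T" "z \<in> T"
  shows "poly (pderiv (\<Prod>x\<in>T. [:- x, 1::complex:])) z \<noteq> 0"
proof -
  have pe: "(\<Prod>x\<in>T. [:- x, 1::complex:]) = [:- z, 1:] * (\<Prod>x\<in>T-{z}. [:- x, 1:])"
    using assms by (subst prod.remove[of _ z]) auto
  have "poly (pderiv (\<Prod>x\<in>T. [:- x, 1::complex:])) z = poly (\<Prod>x\<in>T-{z}. [:- x, 1:]) z"
    unfolding pe by (simp only: pderiv_mult) (simp add: pderiv_pCons)
  also have "\<dots> = (\<Prod>x\<in>T-{z}. z - x)" by (simp add: poly_prod)
  also have "\<dots> \<noteq> 0" using assms(1) by (simp add: prod_zero_iff)
  finally show ?thesis .
qed

lemma exists_P_small: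
  fixes a w :: "nat \<Rightarrow> complex"
  assumes H: "det (Hm K w r a) \<noteq> 0" and sq: "rsquarefree (PP K w r a)"
    and nr: "\<forall>k<K. poly (PP K w r a) (a k) \<noteq> 0" and rI: "r \<le> I" and Kr: "K \<le> 2 * r" and mI: "m + I \<le> K"
  shows "\<exists>P. degree P = I \<and> lead_coeff P = 1 \<and> rsquarefree P \<and> (\<forall>k<K. poly P (a k) \<noteq> 0) \<and>
             (\<forall>j<m. (\<Sum>k<K. w k * poly P (a k) * a k ^ j) = 0)"
proof -
  define c where "c = det (Hm K w r a)"
  define p where "p = Polynomial.smult (1 / c) (PP K w r a)"
  have c0: "c \<noteq> 0" using H c_def by simp
  have degp: "degree p = r" unfolding p_def using degree_PP[OF H] c0 by simp
  have lcp: "lead_coeff p = 1" unfolding p_def using degp lead_PP[OF H] c0 degree_PP[OF H]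
    by (simp add: c_def)
  have polyp: "poly p z = poly (PP K w r a) z / c" for z unfolding p_def by simp
  have sqp: "rsquarefree p" using sq c0 unfolding rsquarefree_roots p_def by (simp add: pderiv_smult)
  have porth: "\<forall>i<r. (\<Sum>k<K. (w k * poly p (a k)) * a k ^ i) = 0"
  proof (intro allI impI)
    fix i assume i: "i < r"
    have "(\<Sum>k<K. (w k * poly p (a k)) * a k ^ i) = (\<Sum>k<K. w k * poly (PP K w r a) (a k) * a k ^ i) / c"
      unfolding polyp by (simp add: sum_divide_distrib)
    then show "(\<Sum>k<K. (w k * poly p (a k)) * a k ^ i) = 0" using PP_orth[OF i] by simp
  qed
  have "p \<noteq> 0" using lcp by auto
  define F where "F = a ` {..<K} \<union> {z. poly p z = 0}"
  have fF: "finite F" unfolding F_def using poly_roots_finite[OF \<open>p \<noteq> 0\<close>] by simp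
  have "infinite (UNIV - F)" using fF infinite_UNIV_char_0 by (simp add: Diff_infinite_finite)
  then obtain T where T: "T \<subseteq> UNIV - F" "finite T" "card T = I - r"
    using infinite_arbitrarily_large by blast
  define A where "A = (\<Prod>x\<in>T. [:- x, 1::complex:])"
  have degA: "degree A = I - r" unfolding A_def using T by (simp add: degree_linear_prod)
  have lcA: "lead_coeff A = 1" unfolding A_def by (rule monic_linear_prod)
  have A0: "A \<noteq> 0" using lcA by auto
  have polyA: "poly A z = 0 \<longleftrightarrow> z \<in> T" for z unfolding A_def poly_prod using T(2)
    by (simp add: prod_zero_iff)
  define P where "P = p * A"
  have degP: "degree P = I" unfolding P_def using degp degA \<open>p \<noteq> 0\<close> A0 rI by (simp add: degree_mult_eq)
  have lcP: "lead_coeff P = 1" unfolding P_def by (simp add: lead_coeff_mult lcp lcA)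
  have Pa: "poly P (a k) \<noteq> 0" if k: "k < K" for k
  proof -
    have "a k \<notin> T" using T(1) k unfolding F_def by auto
    then have "poly A (a k) \<noteq> 0" using polyA by simp
    moreover have "poly p (a k) \<noteq> 0" using nr k c0 polyp by simp
    ultimately show ?thesis unfolding P_def by simp
  qed
  have orth: "(\<Sum>k<K. w k * poly P (a k) * a k ^ j) = 0" if j: "j < m" for j
  proof -
    have dg: "degree (A * monom 1 j) < r" using degA A0 mI Kr j rI
      by (simp add: degree_mult_eq degree_monom_eq)
    have "(\<Sum>k<K. w k * poly P (a k) * a k ^ j) = (\<Sum>k<K. (w k * poly p (a k)) * poly (A * monom 1 j) (a k))"
      unfolding P_def by (intro sum.cong refl) (simp add: poly_monom algebra_simps)
    also have "\<dots> = 0" by (rule lin_comb[OF porth dg])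
    finally show ?thesis .
  qed
  have sqP: "rsquarefree P"
    unfolding rsquarefree_roots
  proof (intro allI notI)
    fix z assume h: "poly P z = 0 \<and> poly (pderiv P) z = 0"
    have d: "poly (pderiv P) z = poly p z * poly (pderiv A) z + poly A z * poly (pderiv p) z"
      unfolding P_def by (simp add: pderiv_mult)
    show False
    proof (cases "poly p z = 0")
      case True
      then have "z \<in> F" unfolding F_def by simp
      then have "z \<notin> T" using T(1) by auto
      then have "poly A z \<noteq> 0" using polyA by simp
      then have "poly (pderiv p) z = 0" using h d True by simp
      then show False using sqp True unfolding rsquarefree_roots by blast
    next
      case False
      then have "poly A z = 0" using h unfolding P_def by simp
      then have "z \<in> T" using polyA by simp
      then have "poly (pderiv A) z \<noteq> 0" unfolding A_def using T(2) by (rule lin_prod_pderiv[rotated])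
      then show False using h d False \<open>poly A z = 0\<close> by simp
    qed
  qed
  show ?thesis using degP lcP sqP Pa orth by blast
qed




definition syl :: "nat \<Rightarrow> complex poly \<Rightarrow> complex mat" where
  "syl r P = mat ((r-1) + r) ((r-1) + r) (\<lambda>(i,j). if j < r-1 then coeff (monom 1 j * P) i
      else coeff (monom 1 (j-(r-1)) * pderiv P) i)"

definition Ap :: "nat \<Rightarrow> complex vec \<Rightarrow> complex poly" where
  "Ap r v = (\<Sum>j<r-1. monom (v $ j) j)"

definition Bp :: "nat \<Rightarrow> complex vec \<Rightarrow> complex poly" where
  "Bp r v = (\<Sum>j<r. monom (v $ (j + (r-1))) j)"

lemma syl_carrier: "syl r P \<in> carrier_mat ((r-1)+r) ((r-1)+r)" unfolding syl_def by simp

lemma coeff_Ap: "coeff (Ap r v) j = (if j < r - 1 then v $ j else 0)"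
  unfolding Ap_def by (simp add: coeff_sum)

lemma coeff_Bp: "coeff (Bp r v) j = (if j < r then v $ (j + (r-1)) else 0)"
  unfolding Bp_def by (simp add: coeff_sum)


lemma syl_mult:
  assumes i: "i < (r-1) + r" and v: "v \<in> carrier_vec ((r-1) + r)"
  shows "(syl r P *\<^sub>v v) $ i = coeff (Ap r v * P + Bp r v * pderiv P) i"
proof -
  have "(syl r P *\<^sub>v v) $ i = (\<Sum>j\<in>{0..<(r-1)+r}. syl r P $$ (i,j) * v $ j)"
    using i v unfolding syl_def by (simp add: scalar_prod_def)
  also have "\<dots> = (\<Sum>j\<in>{0..<r-1}. syl r P $$ (i,j) * v $ j) + (\<Sum>j\<in>{r-1..<(r-1)+r}. syl r P $$ (i,j) * v $ j)"
    by (subst atLeastLessThan_add_Un[of 0 "r-1" r]) (simp_all add: sum.union_disjoint)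
  also have "(\<Sum>j\<in>{0..<r-1}. syl r P $$ (i,j) * v $ j) = (\<Sum>j<r-1. coeff (monom 1 j * P) i * v $ j)"
    using i by (intro sum.cong) (auto simp: syl_def)
  also have "(\<Sum>j\<in>{r-1..<(r-1)+r}. syl r P $$ (i,j) * v $ j) = (\<Sum>j\<in>{0..<r}. syl r P $$ (i,j + (r-1)) * v $ (j + (r-1)))"
    using sum.shift_bounds_nat_ivl[of "\<lambda>j. syl r P $$ (i,j) * v $ j" 0 "r-1" r] by (simp add: add.commute)
  also have "\<dots> = (\<Sum>j<r. coeff (monom 1 j * pderiv P) i * v $ (j + (r-1)))"
    using i by (intro sum.cong) (auto simp: syl_def)
  also have "(\<Sum>j<r-1. coeff (monom 1 j * P) i * v $ j) = coeff (Ap r v * P) i"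
    unfolding Ap_def sum_distrib_right coeff_sum
    by (intro sum.cong refl) (simp add: coeff_monom_mult)
  also have "(\<Sum>j<r. coeff (monom 1 j * pderiv P) i * v $ (j + (r-1))) = coeff (Bp r v * pderiv P) i"
    unfolding Bp_def sum_distrib_right coeff_sum
    by (intro sum.cong refl) (simp add: coeff_monom_mult)
  finally show ?thesis by simp
qed


lemma card_roots_rsqf:
  assumes "rsquarefree (P::complex poly)"
  shows "card {z. poly P z = 0} = degree P"
proof -
  have P0: "P \<noteq> 0" using assms unfolding rsquarefree_def by simp
  have f: "finite {z. poly P z = 0}" using poly_roots_finite[OF P0] .
  have "degree P = degree (Polynomial.smult (lead_coeff P) (\<Prod>z|poly P z = 0. [:-z, 1:]))"
    using complex_poly_decompose_rsquarefree[OF assms] by simp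
  also have "\<dots> = card {z. poly P z = 0}" using P0 f by (simp add: degree_linear_prod)
  finally show ?thesis by simp
qed

lemma syl_det_zero:
  assumes r: "r \<ge> 2" and dP: "degree P = r" and z: "poly P z = 0" "poly (pderiv P) z = 0"
  shows "det (syl r P) = 0"
proof -
  have "[:- z, 1:] dvd P" using z(1) by (simp add: poly_eq_0_iff_dvd)
  then obtain P1 where P1: "P = [:- z, 1:] * P1" by (rule dvdE)
  have "[:- z, 1:] dvd pderiv P" using z(2) by (simp add: poly_eq_0_iff_dvd)
  then obtain P2 where P2: "pderiv P = [:- z, 1:] * P2" by (rule dvdE)
  have "P \<noteq> 0" using dP r by auto
  then have "P1 \<noteq> 0" using P1 by auto
  then have dP1: "degree P1 = r - 1" using dP unfolding P1 by (subst (asm) degree_mult_eq) auto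
  have dP': "degree (pderiv P) = r - 1" using dP by (simp add: degree_pderiv)
  have "pderiv P \<noteq> 0"
  proof
    assume "pderiv P = 0"
    then show False using dP' r by simp
  qed
  then have "P2 \<noteq> 0" using P2 by auto
  then have dP2: "degree P2 = r - 2" using dP' unfolding P2 by (subst (asm) degree_mult_eq) auto
  define v where "v = vec ((r-1)+r) (\<lambda>j. if j < r-1 then coeff P2 j else - coeff P1 (j-(r-1)))"
  have vc: "v \<in> carrier_vec ((r-1)+r)" unfolding v_def by simp
  have A: "Ap r v = P2"
  proof (rule poly_eqI)
    fix j show "coeff (Ap r v) j = coeff P2 j"
      unfolding coeff_Ap using dP2 r by (auto simp: v_def coeff_eq_0)
  qed
  have B: "Bp r v = - P1"
  proof (rule poly_eqI)
    fix j show "coeff (Bp r v) j = coeff (- P1) j"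
      unfolding coeff_Bp using dP1 r by (auto simp: v_def coeff_eq_0)
  qed
  have S: "Ap r v * P + Bp r v * pderiv P = 0"
  proof -
    have "Ap r v * P + Bp r v * pderiv P = P2 * ([:- z, 1:] * P1) - P1 * ([:- z, 1:] * P2)"
      unfolding A B P2 using P1 by simp
    also have "\<dots> = 0" by (simp only: ac_simps diff_self)
    finally show ?thesis .
  qed
  have "syl r P *\<^sub>v v = 0\<^sub>v ((r-1)+r)"
  proof (rule eq_vecI)
    fix i assume "i < dim_vec (0\<^sub>v ((r-1)+r) :: complex vec)"
    then have i: "i < (r-1)+r" by simp
    show "(syl r P *\<^sub>v v) $ i = 0\<^sub>v ((r-1)+r) $ i" using syl_mult[OF i vc, of P] S i by (simp del: coeff_add)
  qed (simp add: syl_def)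
  moreover have "v \<noteq> 0\<^sub>v ((r-1)+r)"
  proof
    assume "v = 0\<^sub>v ((r-1)+r)"
    then have "v $ ((r-1)+(r-1)) = 0" using r by simp
    moreover have e1: "r + r - Suc (Suc 0) - (r - 1) = r - Suc 0" using r by arith
    moreover have e2: "\<not> (r + r - Suc (Suc 0) < r - Suc 0)" using r by arith
    ultimately have "coeff P1 (r-1) = 0" using r by (simp add: v_def)
    then have "lead_coeff P1 = 0" using dP1 by simp
    then show False using \<open>P1 \<noteq> 0\<close> by simp
  qed
  ultimately show ?thesis using det_0_iff_vec_prod_zero[OF syl_carrier] vc by blast
qed

lemma syl_det_nz:
  assumes r: "r \<ge> 2" and dP: "degree P = r" and sq: "rsquarefree P"
  shows "det (syl r P) \<noteq> 0"
proof
  assume "det (syl r P) = 0"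
  then obtain v where v: "v \<in> carrier_vec ((r-1)+r)" "v \<noteq> 0\<^sub>v ((r-1)+r)" "syl r P *\<^sub>v v = 0\<^sub>v ((r-1)+r)"
    using det_0_iff_vec_prod_zero[OF syl_carrier] by blast
  define A where "A = Ap r v"
  define B where "B = Bp r v"
  have dA: "degree A \<le> r - 2" unfolding A_def by (intro degree_le) (use r in \<open>auto simp: coeff_Ap\<close>)
  have dB: "degree B \<le> r - 1" unfolding B_def by (intro degree_le) (use r in \<open>auto simp: coeff_Bp\<close>)
  have dS1: "degree (A * P) \<le> (r-1) + r - 1"
    using degree_mult_le[of A P] dA dP r by linarith
  have dS2: "degree (B * pderiv P) \<le> (r-1) + r - 1"
    using degree_mult_le[of B "pderiv P"] dB dP r by (simp add: degree_pderiv)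
  have S: "A * P + B * pderiv P = 0"
  proof (rule poly_eqI)
    fix i
    show "coeff (A * P + B * pderiv P) i = coeff 0 i"
    proof (cases "i < (r-1)+r")
      case True
      then have "(syl r P *\<^sub>v v) $ i = 0" using v(3) by simp
      then show ?thesis using syl_mult[OF True v(1)] by (simp add: A_def B_def)
    next
      case False
      then have "coeff (A * P) i = 0" "coeff (B * pderiv P) i = 0"
        using dS1 dS2 r by (auto intro!: coeff_eq_0)
      then show ?thesis by simp
    qed
  qed
  have P0: "P \<noteq> 0" using sq unfolding rsquarefree_def by simp
  have Bz: "poly B z = 0" if "poly P z = 0" for z
  proof -
    have "poly (A * P + B * pderiv P) z = 0" using S by simp
    then have "poly B z * poly (pderiv P) z = 0" using that by simp
    moreover have "poly (pderiv P) z \<noteq> 0" using sq that unfolding rsquarefree_roots by blast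
    ultimately show ?thesis by simp
  qed
  have B0: "B = 0"
  proof (rule ccontr)
    assume "B \<noteq> 0"
    have "card {z. poly P z = 0} \<le> card {z. poly B z = 0}"
      using Bz poly_roots_finite[OF \<open>B \<noteq> 0\<close>] by (intro card_mono) auto
    also have "\<dots> \<le> degree B" using card_poly_roots_bound[OF \<open>B \<noteq> 0\<close>] .
    finally show False using card_roots_rsqf[OF sq] dP dB r by linarith
  qed
  then have "A * P = 0" using S by simp
  then have A0: "A = 0" using P0 by simp
  have "v = 0\<^sub>v ((r-1)+r)"
  proof (rule eq_vecI)
    fix j assume j: "j < dim_vec (0\<^sub>v ((r-1)+r) :: complex vec)"
    show "v $ j = 0\<^sub>v ((r-1)+r) $ j"
    proof (cases "j < r - 1")
      case True
      then have "coeff A j = v $ j" unfolding A_def coeff_Ap by simp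
      then show ?thesis using A0 j by simp
    next
      case False
      then have "coeff B (j - (r-1)) = v $ j" unfolding B_def coeff_Bp using j by simp
      then show ?thesis using B0 j by simp
    qed
  qed (use v(1) in simp)
  with v(2) show False by simp
qed




lemma mpf_mom:
  assumes "\<And>k. k < K \<Longrightarrow> mpf K (\<lambda>a. U a k)"
  shows "mpf K (\<lambda>a. mom K (U a) a n)"
  unfolding mom_def by (intro mpf_sum mpf_mult mpf_power mpf_var assms) auto

lemma mpf_hk_entry:
  assumes "\<And>k. k < K \<Longrightarrow> mpf K (\<lambda>a. U a k)" "i < n" "j < n"
  shows "mpf K (\<lambda>a. hk K (U a) a n $$ (i,j))"
  using assms(2,3) mpf_mom[OF assms(1)] unfolding hk_def by simp

lemma mpf_hk_det:
  assumes "\<And>k. k < K \<Longrightarrow> mpf K (\<lambda>a. U a k)"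
  shows "mpf K (\<lambda>a. det (hk K (U a) a n))"
  by (rule mpf_det[OF hk_carrier]) (rule mpf_hk_entry[OF assms])

lemma mpf_ev:
  assumes i: "i < r"
  shows "mpf K (\<lambda>a. ev K w r a $ i)"
proof -
  have ev: "ev K w r a $ i = (\<Sum>j\<in>{0..<r}. ((-1)^(j+i) * det (mat_delete (Hm K w r a) j i)) * mom K w a (j + r))" for a
  proof -
    have c: "adj_mat (Hm K w r a) \<in> carrier_mat r r" using adj_mat(1)[OF Hm_carrier] .
    have "ev K w r a $ i = row (adj_mat (Hm K w r a)) i \<bullet> bv K w r a"
      unfolding ev_def using i c by simp
    also have "\<dots> = (\<Sum>j\<in>{0..<r}. adj_mat (Hm K w r a) $$ (i,j) * bv K w r a $ j)"
      using c i by (simp add: scalar_prod_def bv_def)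
    also have "\<dots> = (\<Sum>j\<in>{0..<r}. ((-1)^(j+i) * det (mat_delete (Hm K w r a) j i)) * mom K w a (j + r))"
      using i Hm_carrier[of K w r a] by (intro sum.cong refl) (simp add: adj_mat_def cofactor_def bv_def)
    finally show ?thesis .
  qed
  have md: "mpf K (\<lambda>a. det (mat_delete (Hm K w r a) j i))" for j
  proof (rule mpf_det)
    show "mat_delete (Hm K w r a) j i \<in> carrier_mat (r-1) (r-1)" for a
      using mat_delete_carrier[OF Hm_carrier] .
    fix x y assume xy: "x < r - 1" "y < r - 1"
    have "mat_delete (Hm K w r a) j i $$ (x, y) = mom K w a ((if x < j then x else Suc x) + (if y < i then y else Suc y))" for a
      using xy Hm_carrier[of K w r a] unfolding mat_delete_def by (simp add: Hm_def hk_def)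
    then show "mpf K (\<lambda>a. mat_delete (Hm K w r a) j i $$ (x, y))"
      using mpf_mom[of K "\<lambda>a. w", OF mpf_const] by simp
  qed
  show ?thesis unfolding ev
    by (intro mpf_sum mpf_mult mpf_const md mpf_mom[of K "\<lambda>a. w", OF mpf_const]) auto
qed

lemma mpf_ppc: "mpf K (\<lambda>a. ppc K w r a i)"
proof -
  have "mpf K (\<lambda>a. det (Hm K w r a))" unfolding Hm_def by (rule mpf_hk_det[OF mpf_const])
  moreover have "i < r \<Longrightarrow> mpf K (\<lambda>a. - (ev K w r a $ i))" by (intro mpf_minus mpf_ev)
  ultimately show ?thesis unfolding ppc_def
    by (cases "i < r"; cases "i = r") (simp_all add: mpf_const)
qed

lemma mpf_syl: "mpf K (\<lambda>a. det (syl r (PP K w r a)))"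
proof (rule mpf_det[OF syl_carrier])
  fix i j
  have e: "syl r (PP K w r a) $$ (i,j) = (if j < r - 1 then (if i < j then 0 else ppc K w r a (i - j))
      else (if i < j - (r-1) then 0 else of_nat (Suc (i - (j - (r-1)))) * ppc K w r a (Suc (i - (j - (r-1))))))"
    if "i < (r-1)+r" "j < (r-1)+r" for a
    using that unfolding syl_def by (simp add: coeff_monom_mult coeff_pderiv coeff_PP)
  assume "i < (r-1)+r" "j < (r-1)+r"
  then show "mpf K (\<lambda>a. syl r (PP K w r a) $$ (i,j))"
    unfolding e[OF \<open>i < _\<close> \<open>j < _\<close>] by (intro mpf_if mpf_const mpf_mult mpf_ppc)
qed




lemma grouping:
  fixes w :: "nat \<Rightarrow> complex"
  assumes "finite J" "\<forall>k\<in>J. w k \<noteq> 0" "2 \<le> n" "n \<le> card J"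
  shows "\<exists>\<sigma>. (\<forall>k\<in>J. \<sigma> k < n) \<and> (\<forall>g<n. (\<Sum>k\<in>{k\<in>J. \<sigma> k = g}. w k) \<noteq> 0)"
  using assms
proof (induction J arbitrary: n rule: finite_induct)
  case empty then show ?case by simp
next
  case (insert x F)
  let ?S = "insert x F"
  have cS: "card ?S = Suc (card F)" using insert by simp
  show ?case
  proof (cases "n = card ?S")
    case True
    have "card ?S = card {..<n}" using True by simp
    then obtain h where h: "bij_betw h ?S {..<n}"
      using finite_same_card_bij[OF finite.insertI[OF insert.hyps(1)] finite_lessThan] by blast
    have fib: "{k\<in>?S. h k = g} = {inv_into ?S h g}" if g: "g < n" for g
    proof -
      have "g \<in> h ` ?S" using h g by (simp add: bij_betw_def)
      then have i1: "inv_into ?S h g \<in> ?S" "h (inv_into ?S h g) = g"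
        by (rule inv_into_into, rule f_inv_into_f)
      have "k = inv_into ?S h g" if "k \<in> ?S" "h k = g" for k
        using h that i1 unfolding bij_betw_def by (metis inj_onD)
      then show ?thesis using i1 by blast
    qed
    show ?thesis
    proof (intro exI conjI ballI allI impI)
      fix k assume "k \<in> ?S" then show "h k < n" using h unfolding bij_betw_def by blast
    next
      fix g assume g: "g < n"
      have "inv_into ?S h g \<in> ?S" using h g
        by (metis bij_betw_def inv_into_into lessThan_iff)
      then have "w (inv_into ?S h g) \<noteq> 0" using insert.prems(1) by blast
      then show "(\<Sum>k\<in>{k\<in>?S. h k = g}. w k) \<noteq> 0" unfolding fib[OF g] by simp
    qed
  next
    case False
    then have nF: "n \<le> card F" using insert.prems(3) cS by simp
    obtain \<sigma> where \<sigma>: "\<forall>k\<in>F. \<sigma> k < n" "\<forall>g<n. (\<Sum>k\<in>{k\<in>F. \<sigma> k = g}. w k) \<noteq> 0"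
      using insert.IH[OF _ insert.prems(2) nF] insert.prems(1) by blast
    define s where "s g = (\<Sum>k\<in>{k\<in>F. \<sigma> k = g}. w k)" for g
    have wx: "w x \<noteq> 0" using insert.prems(1) by simp
    have fin: "finite {k\<in>F. \<sigma> k = g}" for g using insert.hyps(1) by simp
    show ?thesis
    proof (cases "\<exists>g<n. s g + w x \<noteq> 0")
      case True
      then obtain g0 where g0: "g0 < n" "s g0 + w x \<noteq> 0" by blast
      define \<tau> where "\<tau> = \<sigma>(x := g0)"
      show ?thesis
      proof (intro exI[of _ \<tau>] conjI ballI allI impI)
        fix k assume "k \<in> ?S" then show "\<tau> k < n" using \<sigma>(1) g0 by (auto simp: \<tau>_def)
      next
        fix g assume g: "g < n"
        show "(\<Sum>k\<in>{k\<in>?S. \<tau> k = g}. w k) \<noteq> 0"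
        proof (cases "g = g0")
          case True
          have "{k\<in>?S. \<tau> k = g} = insert x {k\<in>F. \<sigma> k = g}"
            using insert.hyps(2) True by (auto simp: \<tau>_def)
          then have "(\<Sum>k\<in>{k\<in>?S. \<tau> k = g}. w k) = w x + s g"
            using insert.hyps(2) fin by (simp add: s_def)
          then show ?thesis using g0 True by (simp add: add.commute)
        next
          case False
          have "{k\<in>?S. \<tau> k = g} = {k\<in>F. \<sigma> k = g}"
            using insert.hyps(2) False by (auto simp: \<tau>_def)
          then show ?thesis using \<sigma>(2) g by simp
        qed
      qed
    next
      case False
      then have sg: "s g = - w x" if "g < n" for g using that by (simp add: eq_neg_iff_add_eq_0)
      define \<tau> where "\<tau> k = (if k = x then 1 else if \<sigma> k = 1 then 0 else \<sigma> k)" for k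
      show ?thesis
      proof (intro exI[of _ \<tau>] conjI ballI allI impI)
        fix k assume "k \<in> ?S" then show "\<tau> k < n" using \<sigma>(1) insert.prems(2) by (auto simp: \<tau>_def)
      next
        fix g assume g: "g < n"
        show "(\<Sum>k\<in>{k\<in>?S. \<tau> k = g}. w k) \<noteq> 0"
        proof (cases "g = 0")
          case True
          have "{k\<in>?S. \<tau> k = g} = {k\<in>F. \<sigma> k = 0} \<union> {k\<in>F. \<sigma> k = 1}"
            using insert.hyps(2) True by (auto simp: \<tau>_def)
          moreover have "{k\<in>F. \<sigma> k = 0} \<inter> {k\<in>F. \<sigma> k = 1} = {}" by auto
          ultimately have "(\<Sum>k\<in>{k\<in>?S. \<tau> k = g}. w k) = s 0 + s 1"
            using fin by (simp add: s_def sum.union_disjoint)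
          also have "\<dots> = - 2 * w x" using sg[of 0] sg[of 1] insert.prems(2) by simp
          finally show ?thesis using wx by simp
        next
          case g0: False
          show ?thesis
          proof (cases "g = 1")
            case True
            have "{k\<in>?S. \<tau> k = g} = {x}" using True by (auto simp: \<tau>_def)
            then show ?thesis using wx by simp
          next
            case False
            have "{k\<in>?S. \<tau> k = g} = {k\<in>F. \<sigma> k = g}"
              using insert.hyps(2) False g0 by (auto simp: \<tau>_def)
            then show ?thesis using sg[OF g] wx by (simp add: s_def)
          qed
        qed
      qed
    qed
  qed
qed


lemma fiber_sum:
  fixes w :: "nat \<Rightarrow> complex" and \<sigma> :: "nat \<Rightarrow> nat"
  assumes "finite J" "\<forall>k\<in>J. \<sigma> k < n"
  shows "(\<Sum>k\<in>J. w k * G (\<sigma> k)) = (\<Sum>g<n. (\<Sum>k\<in>{k\<in>J. \<sigma> k = g}. w k) * G g)"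
proof -
  have "(\<Sum>g<n. (\<Sum>k\<in>{k\<in>J. \<sigma> k = g}. w k) * G g) = (\<Sum>g<n. \<Sum>k\<in>{k\<in>J. \<sigma> k = g}. w k * G (\<sigma> k))"
    by (intro sum.cong refl) (simp add: sum_distrib_right)
  also have "\<dots> = (\<Sum>k\<in>J. w k * G (\<sigma> k))"
    using assms by (intro sum.group) auto
  finally show ?thesis by simp
qed

lemma hk_nz_fiber:
  fixes c :: complex
  assumes id: "\<And>p j. (\<Sum>k<K. u k * poly p (a k) * a k ^ j) = (\<Sum>g<n. W g * poly p (of_nat g + c) * (of_nat g + c) ^ j)"
    and W: "\<forall>g<n. W g \<noteq> 0"
  shows "det (hk K u a n) \<noteq> 0"
proof (rule hk_ndc)
  fix p :: "complex poly" assume dp: "degree p < n" and orth: "\<forall>j<n. (\<Sum>k<K. u k * poly p (a k) * a k ^ j) = 0"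
  define \<nu> where "\<nu> g = (of_nat g + c)" for g
  have inj: "inj_on \<nu> {..<n}" unfolding \<nu>_def by (intro inj_onI) simp
  have o2: "\<forall>j<n. (\<Sum>g\<in>{..<n}. (W g * poly p (\<nu> g)) * \<nu> g ^ j) = 0"
    using orth id by (simp add: \<nu>_def)
  have z: "poly p (\<nu> g) = 0" if g: "g < n" for g
  proof -
    have "W g * poly p (\<nu> g) = 0"
      by (rule dual_vandermonde[of "{..<n}" \<nu> n "\<lambda>g. W g * poly p (\<nu> g)" g]) (use inj o2 g in auto)
    then show ?thesis using W g by simp
  qed
  show "p = 0"
  proof (rule ccontr)
    assume p0: "p \<noteq> 0"
    have "card (\<nu> ` {..<n}) \<le> card {x. poly p x = 0}"
      using z poly_roots_finite[OF p0] by (intro card_mono) auto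
    also have "\<dots> \<le> degree p" by (rule card_poly_roots_bound[OF p0])
    finally show False using dp inj by (simp add: card_image)
  qed
qed

lemma Z1:
  fixes w :: "nat \<Rightarrow> complex"
  assumes "2 \<le> n" "n \<le> K" "\<forall>k<K. w k \<noteq> 0"
  shows "\<exists>a. det (hk K w a n) \<noteq> 0"
proof -
  obtain \<sigma> where \<sigma>: "\<forall>k\<in>{..<K}. \<sigma> k < n" "\<forall>g<n. (\<Sum>k\<in>{k\<in>{..<K}. \<sigma> k = g}. w k) \<noteq> 0"
  proof -
    have "\<exists>\<sigma>. (\<forall>k\<in>{..<K}. \<sigma> k < n) \<and> (\<forall>g<n. (\<Sum>k\<in>{k\<in>{..<K}. \<sigma> k = g}. w k) \<noteq> 0)"
      by (rule grouping) (simp_all add: assms)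
    then show ?thesis using that by blast
  qed
  define a where "a k = (of_nat (\<sigma> k) :: complex)" for k
  have "det (hk K w a n) \<noteq> 0"
  proof (rule hk_nz_fiber[where c = 0 and W = "\<lambda>g. \<Sum>k\<in>{k\<in>{..<K}. \<sigma> k = g}. w k"])
    fix p j
    show "(\<Sum>k<K. w k * poly p (a k) * a k ^ j) = (\<Sum>g<n. (\<Sum>k\<in>{k\<in>{..<K}. \<sigma> k = g}. w k) * poly p (of_nat g + 0) * (of_nat g + 0) ^ j)"
      using fiber_sum[of "{..<K}" \<sigma> n w "\<lambda>g. poly p (of_nat g) * of_nat g ^ j"] \<sigma>(1)
      by (simp add: a_def mult.assoc)
  qed (use \<sigma>(2) in auto)
  then show ?thesis by blast
qed

lemma Z3:
  fixes w :: "nat \<Rightarrow> complex"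
  assumes "m < K" "2 \<le> r" "r \<le> K - 1" "\<forall>k<K. w k \<noteq> 0"
  shows "\<exists>a. det (hk K (\<lambda>k. w k * (a k - a m)) a r) \<noteq> 0"
proof -
  have cJ: "card ({..<K} - {m}) = K - 1" using assms(1) by simp
  obtain \<sigma> where \<sigma>: "\<forall>k\<in>{..<K}-{m}. \<sigma> k < r" "\<forall>g<r. (\<Sum>k\<in>{k\<in>{..<K}-{m}. \<sigma> k = g}. w k) \<noteq> 0"
  proof -
    have "\<exists>\<sigma>. (\<forall>k\<in>{..<K}-{m}. \<sigma> k < r) \<and> (\<forall>g<r. (\<Sum>k\<in>{k\<in>{..<K}-{m}. \<sigma> k = g}. w k) \<noteq> 0)"
      by (rule grouping) (use assms cJ in simp_all)
    then show ?thesis using that by blast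
  qed
  define a where "a k = (if k = m then 0 else of_nat (\<sigma> k) + 1 :: complex)" for k
  define W where "W g = (\<Sum>k\<in>{k\<in>{..<K}-{m}. \<sigma> k = g}. w k) * (of_nat g + 1)" for g
  have "det (hk K (\<lambda>k. w k * (a k - a m)) a r) \<noteq> 0"
  proof (rule hk_nz_fiber[where c = 1 and W = W])
    fix p j
    have "(\<Sum>k<K. w k * (a k - a m) * poly p (a k) * a k ^ j) = (\<Sum>k\<in>{..<K}-{m}. w k * (a k - a m) * poly p (a k) * a k ^ j)"
      using assms(1) by (subst sum.remove[of _ m]) simp_all
    also have "\<dots> = (\<Sum>k\<in>{..<K}-{m}. w k * ((of_nat (\<sigma> k) + 1) * poly p (of_nat (\<sigma> k) + 1) * (of_nat (\<sigma> k) + 1) ^ j))"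
      by (intro sum.cong refl) (simp add: a_def algebra_simps)
    also have "\<dots> = (\<Sum>g<r. W g * poly p (of_nat g + 1) * (of_nat g + 1) ^ j)"
      using fiber_sum[of "{..<K}-{m}" \<sigma> r w "\<lambda>g. (of_nat g + 1) * poly p (of_nat g + 1) * (of_nat g + 1) ^ j"] \<sigma>(1)
      by (simp add: W_def algebra_simps)
    finally show "(\<Sum>k<K. w k * (a k - a m) * poly p (a k) * a k ^ j) = (\<Sum>g<r. W g * poly p (of_nat g + 1) * (of_nat g + 1) ^ j)" .
  next
    have "(of_nat g + 1 :: complex) \<noteq> 0" for g
    proof -
      have "(of_nat g + 1 :: complex) = of_nat (Suc g)" by simp
      also have "\<dots> \<noteq> 0" by (rule of_nat_neq_0)
      finally show ?thesis .
    qed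
    then show "\<forall>g<r. W g \<noteq> 0" using \<sigma>(2) unfolding W_def by simp
  qed
  then show ?thesis by blast
qed


lemma rsqf_linear_prod:
  assumes "finite T"
  shows "rsquarefree (\<Prod>x\<in>T. [:- x, 1::complex:])"
  unfolding rsquarefree_roots
proof (intro allI notI)
  fix z assume h: "poly (\<Prod>x\<in>T. [:- x, 1::complex:]) z = 0 \<and> poly (pderiv (\<Prod>x\<in>T. [:- x, 1::complex:])) z = 0"
  then have "z \<in> T" using assms by (simp add: poly_prod prod_zero_iff)
  then show False using lin_prod_pderiv[OF assms] h by blast
qed

lemma Z2:
  fixes w :: "nat \<Rightarrow> complex"
  assumes r: "2 \<le> r" "r \<le> K" and w: "\<forall>k<K. w k \<noteq> 0"
  shows "\<exists>a. det (syl r (PP K w r a)) \<noteq> 0"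
proof -
  obtain \<sigma> where \<sigma>: "\<forall>k\<in>{..<K}. \<sigma> k < r" "\<forall>g<r. (\<Sum>k\<in>{k\<in>{..<K}. \<sigma> k = g}. w k) \<noteq> 0"
  proof -
    have "\<exists>\<sigma>. (\<forall>k\<in>{..<K}. \<sigma> k < r) \<and> (\<forall>g<r. (\<Sum>k\<in>{k\<in>{..<K}. \<sigma> k = g}. w k) \<noteq> 0)"
      by (rule grouping) (use assms in simp_all)
    then show ?thesis using that by blast
  qed
  define a where "a k = (of_nat (\<sigma> k) :: complex)" for k
  have H: "det (Hm K w r a) \<noteq> 0" unfolding Hm_def
  proof (rule hk_nz_fiber[where c = 0 and W = "\<lambda>g. \<Sum>k\<in>{k\<in>{..<K}. \<sigma> k = g}. w k"])
    fix p j
    show "(\<Sum>k<K. w k * poly p (a k) * a k ^ j) = (\<Sum>g<r. (\<Sum>k\<in>{k\<in>{..<K}. \<sigma> k = g}. w k) * poly p (of_nat g + 0) * (of_nat g + 0) ^ j)"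
      using fiber_sum[of "{..<K}" \<sigma> r w "\<lambda>g. poly p (of_nat g) * of_nat g ^ j"] \<sigma>(1)
      by (simp add: a_def mult.assoc)
  qed (use \<sigma>(2) in auto)
  define T where "T = (of_nat ` {..<r} :: complex set)"
  define Pi where "Pi = (\<Prod>x\<in>T. [:- x, 1::complex:])"
  have fT: "finite T" unfolding T_def by simp
  have cT: "card T = r" unfolding T_def by (simp add: card_image inj_on_def)
  have degPi: "degree Pi = r" unfolding Pi_def using fT cT by (simp add: degree_linear_prod)
  have lcPi: "lead_coeff Pi = 1" unfolding Pi_def by (rule monic_linear_prod)
  have Pia: "poly Pi (a k) = 0" if "k < K" for k
  proof -
    have "a k \<in> T" unfolding T_def a_def using \<sigma>(1) that by auto
    then show ?thesis unfolding Pi_def poly_prod using fT by (intro prod_zero) (auto intro!: bexI[of _ "a k"])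
  qed
  define Dp where "Dp = PP K w r a - Polynomial.smult (det (Hm K w r a)) Pi"
  have dD: "degree Dp < r"
  proof -
    have "coeff Dp i = 0" if "i \<ge> r" for i
    proof (cases "i = r")
      case True
      then show ?thesis unfolding Dp_def using lcPi degPi by (simp add: coeff_PP ppc_def)
    next
      case False
      then have "i > r" using that by simp
      then show ?thesis unfolding Dp_def using degPi degree_PP_le[of K w r a]
        by (simp add: coeff_eq_0)
    qed
    then have "degree Dp \<le> r - 1" using r by (intro degree_le) auto
    then show ?thesis using r by linarith
  qed
  have "\<forall>j<r. (\<Sum>k<K. w k * poly Dp (a k) * a k ^ j) = 0"
  proof (intro allI impI)
    fix j assume j: "j < r"
    have "(\<Sum>k<K. w k * poly Dp (a k) * a k ^ j) = (\<Sum>k<K. w k * poly (PP K w r a) (a k) * a k ^ j)"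
      unfolding Dp_def by (intro sum.cong refl) (simp add: Pia)
    then show "(\<Sum>k<K. w k * poly Dp (a k) * a k ^ j) = 0" using PP_orth[OF j] by simp
  qed
  then have "Dp = 0" using hk_nd[OF H[unfolded Hm_def] dD] by simp
  then have PPe: "PP K w r a = Polynomial.smult (det (Hm K w r a)) Pi" unfolding Dp_def by simp
  have "rsquarefree Pi" unfolding Pi_def by (rule rsqf_linear_prod[OF fT])
  then have "rsquarefree (PP K w r a)" unfolding PPe rsquarefree_roots using H
    by (simp add: pderiv_smult)
  then have "det (syl r (PP K w r a)) \<noteq> 0" using syl_det_nz r degree_PP[OF H] by blast
  then show ?thesis by blast
qed




definition Gd1 :: "nat \<Rightarrow> (nat \<Rightarrow> complex) \<Rightarrow> nat \<Rightarrow> (nat \<Rightarrow> complex) \<Rightarrow> complex" where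
  "Gd1 K w r a = ((\<Prod>n\<in>{2..r}. det (hk K w a n)) * det (syl r (PP K w r a))) *
      (\<Prod>m<K. det (hk K (\<lambda>k. w k * (a k - a m)) a r))"

lemma mpf_Gd1: "mpf K (Gd1 K w r)"
proof -
  have f1: "mpf K (\<lambda>a. \<Prod>n\<in>{2..r}. det (hk K w a n))"
    by (intro mpf_prod mpf_hk_det[of K "\<lambda>a. w"] mpf_const) auto
  have f3: "mpf K (\<lambda>a. \<Prod>m<K. det (hk K (\<lambda>k. w k * (a k - a m)) a r))"
    by (intro mpf_prod mpf_hk_det[of K "\<lambda>a k. w k * (a k - a _)"] mpf_mult mpf_diff mpf_var mpf_const) auto
  show ?thesis unfolding Gd1_def[abs_def]
    by (intro mpf_mult f1 f3 mpf_syl)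
qed

lemma Gd1_nonzero:
  fixes w :: "nat \<Rightarrow> complex"
  assumes r: "2 \<le> r" "r \<le> K - 1" and w: "\<forall>k<K. w k \<noteq> 0"
  shows "\<exists>a. Gd1 K w r a \<noteq> 0"
proof -
  have f1: "mpf K (\<lambda>a. \<Prod>n\<in>{2..r}. det (hk K w a n))"
    by (intro mpf_prod mpf_hk_det[of K "\<lambda>a. w"] mpf_const) auto
  have f3: "mpf K (\<lambda>a. \<Prod>m<K. det (hk K (\<lambda>k. w k * (a k - a m)) a r))"
    by (intro mpf_prod mpf_hk_det[of K "\<lambda>a k. w k * (a k - a _)"] mpf_mult mpf_diff mpf_var mpf_const) auto
  have n1: "\<exists>a. (\<Prod>n\<in>{2..r}. det (hk K w a n)) \<noteq> 0"
  proof (rule mpf_prod_nonzero)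
    fix n assume "n \<in> {2..r}"
    then show "\<exists>a. det (hk K w a n) \<noteq> 0" using Z1[of n K w] r w by auto
  qed (auto intro: mpf_hk_det[of K "\<lambda>a. w"] mpf_const)
  have n3: "\<exists>a. (\<Prod>m<K. det (hk K (\<lambda>k. w k * (a k - a m)) a r)) \<noteq> 0"
  proof (rule mpf_prod_nonzero)
    fix m assume "m \<in> {..<K}"
    then show "\<exists>a. det (hk K (\<lambda>k. w k * (a k - a m)) a r) \<noteq> 0" using Z3[of m K r w] r w by auto
  next
    fix m assume "m \<in> {..<K}"
    then show "mpf K (\<lambda>a. det (hk K (\<lambda>k. w k * (a k - a m)) a r))"
      by (intro mpf_hk_det[of K "\<lambda>a k. w k * (a k - a m)"] mpf_mult mpf_diff mpf_var mpf_const) auto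
  qed simp
  have n2: "\<exists>a. det (syl r (PP K w r a)) \<noteq> 0" using Z2[of r K w] r w by simp
  obtain a1 where a1: "(\<Prod>n\<in>{2..r}. det (hk K w a1 n)) \<noteq> 0" using n1 by blast
  obtain a2 where a2: "det (syl r (PP K w r a2)) \<noteq> 0" using n2 by blast
  obtain b where b: "(\<Prod>n\<in>{2..r}. det (hk K w b n)) \<noteq> 0 \<and> det (syl r (PP K w r b)) \<noteq> 0"
    using mpf_two_nonzero[OF f1 mpf_syl a1 a2] by blast
  have f12: "mpf K (\<lambda>a. (\<Prod>n\<in>{2..r}. det (hk K w a n)) * det (syl r (PP K w r a)))"
    by (intro mpf_mult f1 mpf_syl)
  obtain a3 where a3: "(\<Prod>m<K. det (hk K (\<lambda>k. w k * (a3 k - a3 m)) a3 r)) \<noteq> 0" using n3 by blast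
  obtain c where "(\<Prod>n\<in>{2..r}. det (hk K w c n)) * det (syl r (PP K w r c)) \<noteq> 0 \<and>
      (\<Prod>m<K. det (hk K (\<lambda>k. w k * (c k - c m)) c r)) \<noteq> 0"
    using mpf_two_nonzero[OF f12 f3, of b a3] b a3 by auto
  then show ?thesis unfolding Gd1_def by auto
qed

lemma core_d1:
  fixes a w :: "nat \<Rightarrow> complex"
  assumes inj: "inj_on a {..<K}" and w: "\<forall>k<K. w k \<noteq> 0" and G: "Gd1 K w r a \<noteq> 0"
    and r: "r = (K - 1) div 2 + 1" and K3: "K \<ge> 3" and IK: "I \<le> K - 1"
  shows "(r \<le> I \<longrightarrow> (\<exists>P. degree P = I \<and> lead_coeff P = 1 \<and> rsquarefree P \<and> (\<forall>k<K. poly P (a k) \<noteq> 0) \<and>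
             (\<forall>j<K - I. (\<Sum>k<K. w k * poly P (a k) * a k ^ j) = 0)))
       \<and> (I < r \<longrightarrow> \<not> (\<exists>P. degree P = I \<and> lead_coeff P = 1 \<and> (\<forall>k<K. poly P (a k) \<noteq> 0) \<and>
             (\<forall>j<K - I. (\<Sum>k<K. w k * poly P (a k) * a k ^ j) = 0)))"
proof -
  have r2: "2 \<le> r" using r K3 by linarith
  have G1: "\<forall>n\<in>{2..r}. det (hk K w a n) \<noteq> 0" using G unfolding Gd1_def by auto
  have G2: "det (syl r (PP K w r a)) \<noteq> 0" using G unfolding Gd1_def by auto
  have G3: "\<forall>m<K. det (hk K (\<lambda>k. w k * (a k - a m)) a r) \<noteq> 0" using G unfolding Gd1_def by auto
  have H: "det (Hm K w r a) \<noteq> 0" using G1 r2 unfolding Hm_def by auto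
  have sq: "rsquarefree (PP K w r a)" unfolding rsquarefree_roots
  proof (intro allI notI)
    fix z assume "poly (PP K w r a) z = 0 \<and> poly (pderiv (PP K w r a)) z = 0"
    then have "det (syl r (PP K w r a)) = 0" using syl_det_zero[OF r2 degree_PP[OF H]] by blast
    then show False using G2 by simp
  qed
  have nr: "\<forall>k<K. poly (PP K w r a) (a k) \<noteq> 0" using PP_nonroot[OF H] G3 by blast
  have Kr: "K \<le> 2 * r" using r by linarith
  show ?thesis
  proof (intro conjI impI)
    assume "r \<le> I"
    show "\<exists>P. degree P = I \<and> lead_coeff P = 1 \<and> rsquarefree P \<and> (\<forall>k<K. poly P (a k) \<noteq> 0) \<and>
             (\<forall>j<K - I. (\<Sum>k<K. w k * poly P (a k) * a k ^ j) = 0)"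
      by (rule exists_P_small[OF H sq nr \<open>r \<le> I\<close> Kr]) (use IK in simp)
  next
    assume Ir: "I < r"
    show "\<not> (\<exists>P. degree P = I \<and> lead_coeff P = 1 \<and> (\<forall>k<K. poly P (a k) \<noteq> 0) \<and>
             (\<forall>j<K - I. (\<Sum>k<K. w k * poly P (a k) * a k ^ j) = 0))"
    proof
      assume "\<exists>P. degree P = I \<and> lead_coeff P = 1 \<and> (\<forall>k<K. poly P (a k) \<noteq> 0) \<and>
             (\<forall>j<K - I. (\<Sum>k<K. w k * poly P (a k) * a k ^ j) = 0)"
      then obtain P where P: "degree P = I" "lead_coeff P = 1" "\<forall>k<K. poly P (a k) \<noteq> 0"
        "\<forall>j<K - I. (\<Sum>k<K. w k * poly P (a k) * a k ^ j) = 0" by blast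
      show False
      proof (cases "I = 0")
        case True
        then show False using NE_vander[OF inj w P(3)] P(4) K3 by simp
      next
        case False
        have "det (hk K w a (Suc I)) \<noteq> 0" using G1 False Ir by auto
        moreover have "Suc I \<le> K - I"
        proof -
          have "I \<le> (K-1) div 2" using Ir r by simp
          moreover have "(K-1) div 2 * 2 \<le> K - 1" by (rule div_times_less_eq_dividend)
          ultimately show ?thesis using K3 by arith
        qed
        moreover have "\<forall>j<Suc I. (\<Sum>k<K. w k * poly P (a k) * a k ^ j) = 0" using P(4) \<open>Suc I \<le> K - I\<close> by auto
        ultimately show False using NE_hankel P(1,2) by blast
      qed
    qed
  qed
qed

lemma core_d2:
  fixes a w :: "nat \<Rightarrow> complex"
  assumes inj: "inj_on a {..<K}" and w: "\<forall>k<K. w k \<noteq> 0" and d: "d \<ge> 2" and K1: "K \<ge> 1"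
    and I: "I \<le> d * (K - 1)"
  shows "((d - 1) * (K - 1) + 1 \<le> I \<longrightarrow> (\<exists>P. degree P = I \<and> lead_coeff P = 1 \<and> rsquarefree P \<and> (\<forall>k<K. poly P (a k) \<noteq> 0) \<and>
             (\<forall>j<d * (K - 1) + 1 - I. (\<Sum>k<K. w k * poly P (a k) * a k ^ j) = 0)))
       \<and> (I < (d - 1) * (K - 1) + 1 \<longrightarrow> \<not> (\<exists>P. degree P = I \<and> lead_coeff P = 1 \<and> (\<forall>k<K. poly P (a k) \<noteq> 0) \<and>
             (\<forall>j<d * (K - 1) + 1 - I. (\<Sum>k<K. w k * poly P (a k) * a k ^ j) = 0)))"
proof (intro conjI impI)
  assume h: "(d - 1) * (K - 1) + 1 \<le> I"
  have "1 \<le> d - 1" using d by linarith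
  then have "1 * (K - 1) \<le> (d - 1) * (K - 1)" by (rule mult_le_mono1)
  then have "K - 1 \<le> (d - 1) * (K - 1)" by simp
  then have KI: "K \<le> I" using h K1 by linarith
  have "d * (K - 1) = (d - 1) * (K - 1) + (K - 1)" using d by (metis add.commute mult_eq_if diff_le_self le_add_diff_inverse2 Suc_diff_1 mult_Suc not_numeral_le_zero)
  then have m: "d * (K - 1) + 1 - I \<le> K - 1" using h by linarith
  show "\<exists>P. degree P = I \<and> lead_coeff P = 1 \<and> rsquarefree P \<and> (\<forall>k<K. poly P (a k) \<noteq> 0) \<and>
             (\<forall>j<d * (K - 1) + 1 - I. (\<Sum>k<K. w k * poly P (a k) * a k ^ j) = 0)"
    by (rule exists_P_big[OF inj w KI m K1])
next
  assume h: "I < (d - 1) * (K - 1) + 1"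
  show "\<not> (\<exists>P. degree P = I \<and> lead_coeff P = 1 \<and> (\<forall>k<K. poly P (a k) \<noteq> 0) \<and>
             (\<forall>j<d * (K - 1) + 1 - I. (\<Sum>k<K. w k * poly P (a k) * a k ^ j) = 0))"
  proof
    assume "\<exists>P. degree P = I \<and> lead_coeff P = 1 \<and> (\<forall>k<K. poly P (a k) \<noteq> 0) \<and>
             (\<forall>j<d * (K - 1) + 1 - I. (\<Sum>k<K. w k * poly P (a k) * a k ^ j) = 0)"
    then obtain P where P: "\<forall>k<K. poly P (a k) \<noteq> 0"
      "\<forall>j<d * (K - 1) + 1 - I. (\<Sum>k<K. w k * poly P (a k) * a k ^ j) = 0" by blast
    have "d * (K - 1) = (d - 1) * (K - 1) + (K - 1)" using d by (metis add.commute mult_eq_if diff_le_self le_add_diff_inverse2 Suc_diff_1 mult_Suc not_numeral_le_zero)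
    then have "K \<le> d * (K - 1) + 1 - I" using h K1 by linarith
    then have "\<forall>j<K. (\<Sum>k<K. w k * poly P (a k) * a k ^ j) = 0" using P(2) by auto
    then show False using NE_vander[OF inj w P(1) K1] by simp
  qed
qed




lemma P_to_beta:
  fixes P :: "complex poly"
  assumes "finite S" "degree P = card S" "lead_coeff P = 1" "rsquarefree P"
  shows "\<exists>\<beta>. inj_on \<beta> S \<and> \<beta> ` S = {z. poly P z = 0} \<and> (\<forall>z. (\<Prod>n\<in>S. z - \<beta> n) = poly P z)"
proof -
  define R where "R = {z. poly P z = 0}"
  have P0: "P \<noteq> 0" using assms(3) by auto
  have fR: "finite R" unfolding R_def using poly_roots_finite[OF P0] .
  have "card R = card S" unfolding R_def using card_roots_rsqf[OF assms(4)] assms(2) by simp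
  then obtain \<beta> where b: "bij_betw \<beta> S R" using finite_same_card_bij[OF assms(1) fR] by metis
  have dec: "P = Polynomial.smult (lead_coeff P) (\<Prod>z\<in>R. [:-z, 1:])"
    using complex_poly_decompose_rsquarefree[OF assms(4)] unfolding R_def by simp
  have "poly P z = (\<Prod>x\<in>R. z - x)" for z
    by (subst dec) (simp add: assms(3) poly_prod)
  also have "(\<Prod>x\<in>R. z - x) = (\<Prod>n\<in>S. z - \<beta> n)" for z
    using prod.reindex_bij_betw[OF b, of "\<lambda>x. z - x"] by simp
  finally have "\<forall>z. (\<Prod>n\<in>S. z - \<beta> n) = poly P z" by simp
  then show ?thesis using b unfolding bij_betw_def R_def by blast
qed

lemma beta_to_P:
  assumes "finite S"
  shows "degree (\<Prod>n\<in>S. [:- \<beta> n, 1::complex:]) = card S" "lead_coeff (\<Prod>n\<in>S. [:- \<beta> n, 1::complex:]) = 1"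
    "poly (\<Prod>n\<in>S. [:- \<beta> n, 1::complex:]) z = (\<Prod>n\<in>S. z - \<beta> n)"
    apply (rule degree_linear_prod[OF assms])
   apply (rule monic_linear_prod)
  by (simp add: poly_prod)

lemma prod_roots_dvd:
  fixes p :: "complex poly"
  assumes "finite A" "inj_on \<beta> A" "\<forall>n\<in>A. poly p (\<beta> n) = 0"
  shows "(\<Prod>n\<in>A. [:- \<beta> n, 1:]) dvd p"
  using assms
proof (induction A arbitrary: p rule: finite_induct)
  case empty then show ?case by simp
next
  case (insert x A)
  have "[:- \<beta> x, 1:] dvd p" using insert.prems(2) by (simp add: poly_eq_0_iff_dvd)
  then obtain q where q: "p = [:- \<beta> x, 1:] * q" by (rule dvdE)
  have "poly q (\<beta> n) = 0" if n: "n \<in> A" for n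
  proof -
    have "\<beta> n \<noteq> \<beta> x"
    proof
      assume e: "\<beta> n = \<beta> x"
      have "n = x" by (rule inj_onD[OF insert.prems(1) e]) (use n in auto)
      then show False using n insert.hyps(2) by simp
    qed
    moreover have "poly p (\<beta> n) = 0" using insert.prems(2) n by simp
    ultimately show ?thesis unfolding q by simp
  qed
  then have "(\<Prod>n\<in>A. [:- \<beta> n, 1:]) dvd q" using insert.IH insert.prems(1) by (simp add: inj_on_insert)
  then have "[:- \<beta> x, 1:] * (\<Prod>n\<in>A. [:- \<beta> n, 1:]) dvd [:- \<beta> x, 1:] * q" by (rule mult_dvd_mono[OF dvd_refl])
  then show ?case unfolding q by (simp only: prod.insert[OF insert.hyps])
qed

definition lagp :: "(nat \<Rightarrow> complex) \<Rightarrow> nat set \<Rightarrow> nat \<Rightarrow> complex poly" where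
  "lagp pts A n = Polynomial.smult (1 / (\<Prod>m\<in>A-{n}. pts n - pts m)) (\<Prod>m\<in>A-{n}. [:- pts m, 1:])"

lemma poly_lagp: "finite A \<Longrightarrow> poly (lagp pts A n) z = lag pts A n z"
  unfolding lagp_def lag_def by (simp add: poly_prod prod_dividef)

lemma degree_lagp: "finite A \<Longrightarrow> n \<in> A \<Longrightarrow> degree (lagp pts A n) \<le> card A - 1"
  unfolding lagp_def using degree_smult_le degree_linear_prod[of "A-{n}" pts]
  by (metis card_Diff_singleton finite_Diff)

lemma lag_nodes:
  assumes "finite A" "inj_on pts A" "n \<in> A" "m \<in> A"
  shows "lag pts A n (pts m) = (if m = n then 1 else 0)"
proof (cases "m = n")
  case True
  have "pts n - pts l \<noteq> 0" if "l \<in> A - {n}" for l using assms that by (metis DiffE inj_onD insertI1 eq_iff_diff_eq_0)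
  then show ?thesis unfolding lag_def using True by (simp add: prod_dividef)
next
  case False
  then show ?thesis unfolding lag_def using assms by (auto intro!: prod_zero bexI[of _ m])
qed


lemma cpa_one:
  fixes a w \<beta> :: "nat \<Rightarrow> complex" and F :: "complex poly" and X :: "nat \<Rightarrow> 'e \<Rightarrow> complex"
  assumes inja: "inj_on a {..<K}" and fNs: "finite Ns" and injb: "inj_on \<beta> Ns"
    and cN: "card Ns \<le> d * (K - 1)" and dF: "degree F = d"
    and orth: "\<forall>j<d * (K - 1) + 1 - card Ns. (\<Sum>k<K. w k * (\<Prod>n\<in>Ns. a k - \<beta> n) * a k ^ j) = 0"
  shows "cpa_output K w a \<beta> F X Ns e = target K w F X e"
proof -
  define x where "x k = X k e" for k
  define Ep where "Ep = (\<Sum>k<K. Polynomial.smult (x k) (lagp a {..<K} k))"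
  have enc: "encoder K a X z e = poly Ep z" for z
    unfolding encoder_def Ep_def x_def by (simp add: poly_sum poly_lagp)
  have Epa: "poly Ep (a k) = x k" if k: "k < K" for k
  proof -
    have "poly Ep (a k) = (\<Sum>l<K. x l * (if k = l then 1 else 0))"
      unfolding Ep_def using k inja by (simp add: poly_sum poly_lagp lag_nodes)
    also have "\<dots> = (\<Sum>l<K. if k = l then x l else 0)" by (intro sum.cong) auto
    also have "\<dots> = x k" using k by simp
    finally show ?thesis .
  qed
  have dEp: "degree Ep \<le> K - 1" unfolding Ep_def
    by (intro degree_sum_le, simp) (metis card_lessThan degree_lagp degree_smult_le finite_lessThan le_trans)
  define Fp where "Fp = pcompose F Ep"
  have polyFp: "poly Fp z = poly F (poly Ep z)" for z unfolding Fp_def by (simp add: poly_pcompose)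
  have dFp: "degree Fp \<le> d * (K - 1)" unfolding Fp_def degree_pcompose dF using dEp by (rule mult_le_mono2)
  define Dp where "Dp = (\<Sum>n\<in>Ns. Polynomial.smult (poly Fp (\<beta> n)) (lagp \<beta> Ns n))"
  have dec: "decoder K a \<beta> F X Ns z e = poly Dp z" for z
    unfolding decoder_def Dp_def by (simp add: poly_sum poly_lagp fNs enc polyFp)
  have dDp: "degree Dp \<le> card Ns - 1" unfolding Dp_def
    by (intro degree_sum_le fNs) (metis degree_lagp degree_smult_le fNs le_trans)
  have Dpb: "poly Dp (\<beta> m) = poly Fp (\<beta> m)" if m: "m \<in> Ns" for m
  proof -
    have "poly Dp (\<beta> m) = (\<Sum>n\<in>Ns. poly Fp (\<beta> n) * (if m = n then 1 else 0))"
      unfolding Dp_def using m fNs injb by (intro trans[OF poly_sum] sum.cong refl) (simp add: poly_lagp lag_nodes)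
    also have "\<dots> = (\<Sum>n\<in>Ns. if m = n then poly Fp (\<beta> n) else 0)" by (intro sum.cong) auto
    also have "\<dots> = poly Fp (\<beta> m)" using m fNs by simp
    finally show ?thesis .
  qed
  define Pg where "Pg = (\<Prod>n\<in>Ns. [:- \<beta> n, 1::complex:])"
  have "Pg dvd (Fp - Dp)" unfolding Pg_def
    by (rule prod_roots_dvd[OF fNs injb]) (simp add: Dpb)
  then obtain Hh where Hh: "Fp - Dp = Pg * Hh" by (rule dvdE)
  have Pg0: "Pg \<noteq> 0" unfolding Pg_def using monic_linear_prod[of \<beta> Ns] by auto
  have dPg: "degree Pg = card Ns" unfolding Pg_def by (rule degree_linear_prod[OF fNs])
  have dH: "degree Hh < d * (K - 1) + 1 - card Ns"
  proof (cases "Hh = 0")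
    case True then show ?thesis using cN by simp
  next
    case False
    have "degree (Fp - Dp) \<le> d * (K - 1)"
      using degree_diff_le[OF dFp] dDp cN by (meson diff_le_self le_trans max.bounded_iff degree_diff_le_max)
    then have "card Ns + degree Hh \<le> d * (K - 1)" using Hh Pg0 False dPg by (simp add: degree_mult_eq)
    then show ?thesis by linarith
  qed
  have orth2: "\<forall>j<d * (K - 1) + 1 - card Ns. (\<Sum>k<K. (w k * poly Pg (a k)) * a k ^ j) = 0"
    using orth unfolding Pg_def by (simp add: poly_prod)
  have "(\<Sum>k<K. (w k * poly Pg (a k)) * poly Hh (a k)) = 0" by (rule lin_comb[OF orth2 dH])
  then have z: "(\<Sum>k<K. w k * (poly Fp (a k) - poly Dp (a k))) = 0"
  proof -
    have "poly Fp z - poly Dp z = poly Pg z * poly Hh z" for z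
      using arg_cong[OF Hh, of "\<lambda>p. poly p z"] by simp
    then show ?thesis using \<open>(\<Sum>k<K. (w k * poly Pg (a k)) * poly Hh (a k)) = 0\<close> by (simp add: mult.assoc)
  qed
  have "cpa_output K w a \<beta> F X Ns e = (\<Sum>k<K. w k * poly Dp (a k))"
    unfolding cpa_output_def dec by simp
  also have "\<dots> = (\<Sum>k<K. w k * poly Fp (a k))"
    using z by (simp add: right_diff_distrib sum_subtractf)
  also have "\<dots> = (\<Sum>k<K. w k * poly F (x k))"
    by (intro sum.cong refl) (simp add: polyFp Epa)
  also have "\<dots> = target K w F X e" unfolding target_def x_def by simp
  finally show ?thesis .
qed




definition goodP :: "nat \<Rightarrow> (nat \<Rightarrow> complex) \<Rightarrow> (nat \<Rightarrow> complex) \<Rightarrow> nat \<Rightarrow> nat \<Rightarrow> complex poly \<Rightarrow> bool" where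
  "goodP K w a I m P = (degree P = I \<and> lead_coeff P = 1 \<and> (\<forall>k<K. poly P (a k) \<noteq> 0) \<and>
      (\<forall>j<m. (\<Sum>k<K. w k * poly P (a k) * a k ^ j) = 0))"

lemma core_all:
  fixes w :: "nat \<Rightarrow> complex"
  assumes K: "K > 0" and d: "d > 0" and dK: "2 \<le> d * (K - 1)" and w: "\<forall>k<K. w k \<noteq> 0"
  shows "\<exists>Gf. mpf K Gf \<and> (\<exists>a0. Gf a0 \<noteq> 0) \<and>
     (\<forall>a. inj_on a {..<K} \<longrightarrow> Gf a \<noteq> 0 \<longrightarrow> (\<forall>I \<le> d * (K - 1).
        (Istar K d \<le> I \<longrightarrow> (\<exists>P. goodP K w a I (d * (K - 1) + 1 - I) P \<and> rsquarefree P)) \<and>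
        (I < Istar K d \<longrightarrow> \<not> (\<exists>P. goodP K w a I (d * (K - 1) + 1 - I) P))))"
proof (cases "d = 1")
  case True
  define r where "r = (K - 1) div 2 + 1"
  have K3: "K \<ge> 3" using dK True by simp
  have r2: "2 \<le> r" "r \<le> K - 1" using K3 unfolding r_def by linarith+
  show ?thesis
  proof (rule exI[of _ "Gd1 K w r"], intro conjI allI impI)
    show "mpf K (Gd1 K w r)" by (rule mpf_Gd1)
    show "\<exists>a0. Gd1 K w r a0 \<noteq> 0" by (rule Gd1_nonzero[OF r2 w])
  next
    fix a I assume inj: "inj_on a {..<K}" and G: "Gd1 K w r a \<noteq> 0" and I: "I \<le> d * (K - 1)"
    have IK: "I \<le> K - 1" using I True by simp
    have m: "d * (K - 1) + 1 - I = K - I" using True K by simp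
    have Is: "Istar K d = r" unfolding Istar_def r_def using True by simp
    note c = core_d1[OF inj w G r_def K3 IK]
    {
      assume "Istar K d \<le> I"
      then show "\<exists>P. goodP K w a I (d * (K - 1) + 1 - I) P \<and> rsquarefree P"
        using c unfolding Is m goodP_def by blast
    next
      assume "I < Istar K d"
      then show "\<not> (\<exists>P. goodP K w a I (d * (K - 1) + 1 - I) P)"
        using c unfolding Is m goodP_def by blast
    }
  qed
next
  case False
  then have d2: "d \<ge> 2" using d by simp
  have Is: "Istar K d = (d - 1) * (K - 1) + 1" unfolding Istar_def using False by simp
  show ?thesis
  proof (rule exI[of _ "\<lambda>a. 1"], intro conjI allI impI)
    show "mpf K (\<lambda>a. 1)" by (rule mpf_const)
    show "\<exists>a0. (1::complex) \<noteq> 0" by simp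
  next
    fix a :: "nat \<Rightarrow> complex" and I assume inj: "inj_on a {..<K}" and I: "I \<le> d * (K - 1)"
    have K1: "K \<ge> 1" using K by simp
    note c = core_d2[OF inj w d2 K1 I]
    {
      assume "Istar K d \<le> I"
      then show "\<exists>P. goodP K w a I (d * (K - 1) + 1 - I) P \<and> rsquarefree P"
        using c unfolding Is goodP_def by blast
    next
      assume "I < Istar K d"
      then show "\<not> (\<exists>P. goodP K w a I (d * (K - 1) + 1 - I) P)"
        using c unfolding Is goodP_def by blast
    }
  qed
qed


lemma extend_beta:
  fixes \<beta> :: "nat \<Rightarrow> complex"
  assumes fI: "finite II" and sub: "II \<subseteq> {..<N}" and inj: "inj_on \<beta> II" and fA: "finite A"
    and disj: "\<beta> ` II \<inter> A = {}"
  shows "\<exists>\<beta>'. inj_on \<beta>' {..<N} \<and> \<beta>' ` {..<N} \<inter> A = {} \<and> (\<forall>n\<in>II. \<beta>' n = \<beta> n)"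
proof -
  define R where "R = {..<N} - II"
  define Fs where "Fs = A \<union> \<beta> ` II"
  have fF: "finite Fs" unfolding Fs_def using fA fI by simp
  have "infinite (UNIV - Fs)" using fF infinite_UNIV_char_0 by (simp add: Diff_infinite_finite)
  then obtain T where T: "T \<subseteq> UNIV - Fs" "finite T" "card T = card R"
    using infinite_arbitrarily_large by blast
  have fR: "finite R" unfolding R_def by simp
  obtain \<gamma> where g: "bij_betw \<gamma> R T" using finite_same_card_bij[OF fR T(2)] T(3) by metis
  define \<beta>' where "\<beta>' n = (if n \<in> II then \<beta> n else \<gamma> n)" for n
  have gT: "\<gamma> n \<in> T" if "n \<in> R" for n using g that unfolding bij_betw_def by blast
  have ginj: "inj_on \<gamma> R" using g unfolding bij_betw_def by blast
  have "inj_on \<beta>' {..<N}"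
  proof (rule inj_onI)
    fix x y assume x: "x \<in> {..<N}" and y: "y \<in> {..<N}" and e: "\<beta>' x = \<beta>' y"
    show "x = y"
    proof (cases "x \<in> II"; cases "y \<in> II")
      assume "x \<in> II" "y \<in> II" then show ?thesis using e inj by (simp add: \<beta>'_def inj_on_def)
    next
      assume xi: "x \<in> II" and yi: "y \<notin> II"
      then have "\<gamma> y \<in> T" using gT y by (simp add: R_def)
      moreover have "\<beta> x \<in> Fs" using xi unfolding Fs_def by simp
      ultimately show ?thesis using e xi yi T(1) by (auto simp: \<beta>'_def)
    next
      assume xi: "x \<notin> II" and yi: "y \<in> II"
      then have "\<gamma> x \<in> T" using gT x by (simp add: R_def)
      moreover have "\<beta> y \<in> Fs" using yi unfolding Fs_def by simp
      ultimately show ?thesis using e xi yi T(1) by (auto simp: \<beta>'_def)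
    next
      assume "x \<notin> II" "y \<notin> II"
      then show ?thesis using e ginj x y by (simp add: \<beta>'_def inj_on_def R_def)
    qed
  qed
  moreover have "\<beta>' ` {..<N} \<inter> A = {}"
  proof -
    have "\<beta>' n \<notin> A" if n: "n < N" for n
    proof (cases "n \<in> II")
      case True then show ?thesis using disj by (auto simp: \<beta>'_def)
    next
      case False
      then have "\<gamma> n \<in> T" using gT n by (simp add: R_def)
      then show ?thesis using False T(1) by (auto simp: \<beta>'_def Fs_def)
    qed
    then show ?thesis by auto
  qed
  moreover have "\<forall>n\<in>II. \<beta>' n = \<beta> n" by (simp add: \<beta>'_def)
  ultimately show ?thesis by blast
qed

lemma orth_extend:
  fixes a w \<beta> \<beta>' :: "nat \<Rightarrow> complex"
  assumes fN: "finite Ng" and sub: "II \<subseteq> Ng" and eq: "\<forall>n\<in>II. \<beta>' n = \<beta> n"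
    and orth: "\<forall>j<C + card (Ng - II). (\<Sum>k<K. w k * (\<Prod>n\<in>II. a k - \<beta> n) * a k ^ j) = 0"
  shows "\<forall>j<C. (\<Sum>k<K. w k * (\<Prod>n\<in>Ng. a k - \<beta>' n) * a k ^ j) = 0"
proof (intro allI impI)
  fix j assume j: "j < C"
  define Ag where "Ag = (\<Prod>n\<in>Ng - II. [:- \<beta>' n, 1::complex:])"
  have dAg: "degree Ag = card (Ng - II)" unfolding Ag_def using fN by (simp add: degree_linear_prod)
  have Ag0: "Ag \<noteq> 0" unfolding Ag_def using monic_linear_prod[of \<beta>' "Ng - II"] by auto
  have dg: "degree (Ag * monom 1 j) < C + card (Ng - II)" using dAg Ag0 j by (simp add: degree_mult_eq degree_monom_eq)
  have orth2: "\<forall>i<C + card (Ng - II). (\<Sum>k<K. (w k * (\<Prod>n\<in>II. a k - \<beta> n)) * a k ^ i) = 0"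
    using orth by (simp add: mult.assoc)
  have split: "(\<Prod>n\<in>Ng. z - \<beta>' n) = (\<Prod>n\<in>Ng - II. z - \<beta>' n) * (\<Prod>n\<in>II. z - \<beta> n)" for z
  proof -
    have "(\<Prod>n\<in>Ng. z - \<beta>' n) = (\<Prod>n\<in>Ng - II. z - \<beta>' n) * (\<Prod>n\<in>II. z - \<beta>' n)"
      using prod.subset_diff[OF sub fN] by simp
    also have "(\<Prod>n\<in>II. z - \<beta>' n) = (\<Prod>n\<in>II. z - \<beta> n)" using eq by simp
    finally show ?thesis .
  qed
  have "(\<Sum>k<K. w k * (\<Prod>n\<in>Ng. a k - \<beta>' n) * a k ^ j) = (\<Sum>k<K. (w k * (\<Prod>n\<in>II. a k - \<beta> n)) * poly (Ag * monom 1 j) (a k))"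
    unfolding split Ag_def by (intro sum.cong refl) (simp add: poly_prod poly_monom algebra_simps)
  also have "\<dots> = 0" by (rule lin_comb[OF orth2 dg])
  finally show "(\<Sum>k<K. w k * (\<Prod>n\<in>Ng. a k - \<beta>' n) * a k ^ j) = 0" .
qed

theorem theorem2:
  fixes K d S N :: nat and w :: "nat \<Rightarrow> complex"
  assumes "K > 0" "d > 0" "S > 0" "N > 0"
    and "S + 2 \<le> N" "N \<le> d * (K - 1) + S"
    and "\<forall>k<K. w k \<noteq> 0"
  shows "\<exists>D c. mpoly_nonzero K D c \<and>
    (\<forall>(\<alpha> :: nat \<Rightarrow> complex) G Ns.
       inj_on \<alpha> {..<K} \<and> mpoly_eval K D c \<alpha> \<noteq> 0 \<and> nonstraggler_pattern N S G Ns \<longrightarrow>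
       (let C = d * (K - 1) + S + 1 - N;
            \<I> = pattern_inter G Ns;
            I = card \<I>;
            L = N - S - I
        in
         ((\<exists>\<beta> :: nat \<Rightarrow> complex. inj_on \<beta> \<I> \<and> \<beta> ` \<I> \<inter> \<alpha> ` {..<K} = {} \<and>
             (\<forall>j < C + L. (\<Sum>k<K. w k * (\<Prod>n\<in>\<I>. \<alpha> k - \<beta> n) * \<alpha> k ^ j) = 0))
          \<longleftrightarrow> I \<ge> Istar K d)
         \<and>
         (I \<ge> Istar K d \<longrightarrow>
            (\<exists>\<beta> :: nat \<Rightarrow> complex. inj_on \<beta> {..<N} \<and> \<beta> ` {..<N} \<inter> \<alpha> ` {..<K} = {} \<and>
               (\<forall>g<G. \<forall>j<C. (\<Sum>k<K. w k * (\<Prod>n\<in>Ns g. \<alpha> k - \<beta> n) * \<alpha> k ^ j) = 0) \<and>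
               cpa_feasible K d w \<alpha> \<beta> G Ns))))"
proof -
  have dK: "2 \<le> d * (K - 1)" using assms(5,6) by linarith
  obtain Gf where Gf: "mpf K Gf" "\<exists>a0. Gf a0 \<noteq> 0" and core: "\<forall>a. inj_on a {..<K} \<longrightarrow> Gf a \<noteq> 0 \<longrightarrow> (\<forall>I \<le> d * (K - 1).
        (Istar K d \<le> I \<longrightarrow> (\<exists>P. goodP K w a I (d * (K - 1) + 1 - I) P \<and> rsquarefree P)) \<and>
        (I < Istar K d \<longrightarrow> \<not> (\<exists>P. goodP K w a I (d * (K - 1) + 1 - I) P)))"
    using core_all[OF assms(1,2) dK assms(7)] by blast
  obtain D c where Dc: "\<forall>a. Gf a = mpoly_eval K D c a" using mpf_mrep[OF Gf(1)] unfolding mrep_def by blast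
  have nz: "mpoly_nonzero K D c" using Gf(2) Dc mpoly_nonzero_if by blast
  show ?thesis
  proof (intro exI[of _ D] exI[of _ c] conjI nz allI impI)
    fix \<alpha> :: "nat \<Rightarrow> complex" and G :: nat and Ns :: "nat \<Rightarrow> nat set"
    assume h: "inj_on \<alpha> {..<K} \<and> mpoly_eval K D c \<alpha> \<noteq> 0 \<and> nonstraggler_pattern N S G Ns"
    have inj: "inj_on \<alpha> {..<K}" using h by blast
    have Ga: "Gf \<alpha> \<noteq> 0" using h Dc by simp
    have G1: "G \<ge> 1" and NsP: "\<And>g. g < G \<Longrightarrow> Ns g \<subseteq> {..<N} \<and> card (Ns g) = N - S"
      using h unfolding nonstraggler_pattern_def by auto
    define II where "II = pattern_inter G Ns"
    have IIsub: "II \<subseteq> Ns g" if "g < G" for g using that unfolding II_def pattern_inter_def by auto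
    have fNs: "finite (Ns g)" if "g < G" for g using NsP[OF that] finite_subset by blast
    have II0: "II \<subseteq> {..<N}" using IIsub[of 0] NsP[of 0] G1 by auto
    have fII: "finite II" using II0 finite_subset by blast
    define I where "I = card II"
    have IleNS: "I \<le> N - S" unfolding I_def using card_mono[OF fNs IIsub, of 0] NsP[of 0] G1 by simp
    have Ile: "I \<le> d * (K - 1)" using IleNS assms(6) by linarith
    have CL: "(d * (K - 1) + S + 1 - N) + (N - S - I) = d * (K - 1) + 1 - I" using assms(5,6) IleNS by linarith
    note cr = core[rule_format, OF inj Ga Ile]
    have P1: "(\<exists>\<beta>. inj_on \<beta> II \<and> \<beta> ` II \<inter> \<alpha> ` {..<K} = {} \<and>
             (\<forall>j < (d * (K - 1) + S + 1 - N) + (N - S - I). (\<Sum>k<K. w k * (\<Prod>n\<in>II. \<alpha> k - \<beta> n) * \<alpha> k ^ j) = 0))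
          \<longleftrightarrow> Istar K d \<le> I"
    proof
      assume "\<exists>\<beta>. inj_on \<beta> II \<and> \<beta> ` II \<inter> \<alpha> ` {..<K} = {} \<and>
             (\<forall>j < (d * (K - 1) + S + 1 - N) + (N - S - I). (\<Sum>k<K. w k * (\<Prod>n\<in>II. \<alpha> k - \<beta> n) * \<alpha> k ^ j) = 0)"
      then obtain \<beta> where b: "inj_on \<beta> II" "\<beta> ` II \<inter> \<alpha> ` {..<K} = {}"
        "\<forall>j < d * (K - 1) + 1 - I. (\<Sum>k<K. w k * (\<Prod>n\<in>II. \<alpha> k - \<beta> n) * \<alpha> k ^ j) = 0"
        unfolding CL by blast
      define P where "P = (\<Prod>n\<in>II. [:- \<beta> n, 1::complex:])"
      have "goodP K w \<alpha> I (d * (K - 1) + 1 - I) P"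
        unfolding goodP_def
      proof (intro conjI allI impI)
        show "degree P = I" unfolding P_def I_def by (rule beta_to_P(1)[OF fII])
        show "lead_coeff P = 1" unfolding P_def by (rule beta_to_P(2)[OF fII])
      next
        fix k assume k: "k < K"
        have "\<alpha> k - \<beta> n \<noteq> 0" if "n \<in> II" for n using b(2) k that by auto
        then show "poly P (\<alpha> k) \<noteq> 0" unfolding P_def beta_to_P(3)[OF fII] using fII by (simp add: prod_zero_iff)
      next
        fix j assume "j < d * (K - 1) + 1 - I"
        then show "(\<Sum>k<K. w k * poly P (\<alpha> k) * \<alpha> k ^ j) = 0" using b(3) unfolding P_def beta_to_P(3)[OF fII] by simp
      qed
      then show "Istar K d \<le> I" using cr by (meson not_le)
    next
      assume "Istar K d \<le> I"
      then obtain P where P: "goodP K w \<alpha> I (d * (K - 1) + 1 - I) P" "rsquarefree P" using cr by blast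
      obtain \<beta> where b: "inj_on \<beta> II" "\<beta> ` II = {z. poly P z = 0}" "\<forall>z. (\<Prod>n\<in>II. z - \<beta> n) = poly P z"
        using P_to_beta[OF fII _ _ P(2)] P(1) unfolding goodP_def I_def by blast
      have "\<beta> ` II \<inter> \<alpha> ` {..<K} = {}" using b(2) P(1) unfolding goodP_def by auto
      moreover have "\<forall>j < d * (K - 1) + 1 - I. (\<Sum>k<K. w k * (\<Prod>n\<in>II. \<alpha> k - \<beta> n) * \<alpha> k ^ j) = 0"
        using P(1) b(3) unfolding goodP_def by simp
      ultimately show "\<exists>\<beta>. inj_on \<beta> II \<and> \<beta> ` II \<inter> \<alpha> ` {..<K} = {} \<and>
             (\<forall>j < (d * (K - 1) + S + 1 - N) + (N - S - I). (\<Sum>k<K. w k * (\<Prod>n\<in>II. \<alpha> k - \<beta> n) * \<alpha> k ^ j) = 0)"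
        using b(1) unfolding CL by blast
    qed
    have P2: "Istar K d \<le> I \<longrightarrow> (\<exists>\<beta> :: nat \<Rightarrow> complex. inj_on \<beta> {..<N} \<and> \<beta> ` {..<N} \<inter> \<alpha> ` {..<K} = {} \<and>
               (\<forall>g<G. \<forall>j<d * (K - 1) + S + 1 - N. (\<Sum>k<K. w k * (\<Prod>n\<in>Ns g. \<alpha> k - \<beta> n) * \<alpha> k ^ j) = 0) \<and>
               cpa_feasible K d w \<alpha> \<beta> G Ns)"
    proof
      assume "Istar K d \<le> I"
      then obtain \<beta> where b: "inj_on \<beta> II" "\<beta> ` II \<inter> \<alpha> ` {..<K} = {}"
        "\<forall>j < d * (K - 1) + 1 - I. (\<Sum>k<K. w k * (\<Prod>n\<in>II. \<alpha> k - \<beta> n) * \<alpha> k ^ j) = 0"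
        using P1 unfolding CL by blast
      obtain \<beta>' where b': "inj_on \<beta>' {..<N}" "\<beta>' ` {..<N} \<inter> \<alpha> ` {..<K} = {}" "\<forall>n\<in>II. \<beta>' n = \<beta> n"
        using extend_beta[OF fII II0 b(1) _ b(2)] by blast
      have orthg: "\<forall>j<d * (K - 1) + S + 1 - N. (\<Sum>k<K. w k * (\<Prod>n\<in>Ns g. \<alpha> k - \<beta>' n) * \<alpha> k ^ j) = 0"
        if g: "g < G" for g
      proof (rule orth_extend[OF fNs[OF g] IIsub[OF g] b'(3)])
        have "card (Ns g - II) = N - S - I" unfolding I_def using card_Diff_subset[OF fII IIsub[OF g]] NsP[OF g] by simp
        then show "\<forall>j<d * (K - 1) + S + 1 - N + card (Ns g - II). (\<Sum>k<K. w k * (\<Prod>n\<in>II. \<alpha> k - \<beta> n) * \<alpha> k ^ j) = 0"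
          using b(3) CL by simp
      qed
      have feas: "cpa_feasible K d w \<alpha> \<beta>' G Ns"
        unfolding cpa_feasible_def
      proof (intro allI impI)
        fix F :: "complex poly" and X :: "nat \<Rightarrow> nat \<times> nat \<Rightarrow> complex" and g e
        assume dF: "degree F = d" and g: "g < G"
        have injg: "inj_on \<beta>' (Ns g)" using b'(1) NsP[OF g] by (meson inj_on_subset)
        have cN: "card (Ns g) \<le> d * (K - 1)" using NsP[OF g] assms(6) by linarith
        have e: "d * (K - 1) + 1 - card (Ns g) = d * (K - 1) + S + 1 - N" using NsP[OF g] assms(5,6) by linarith
        show "cpa_output K w \<alpha> \<beta>' F X (Ns g) e = target K w F X e"
          by (rule cpa_one[OF inj fNs[OF g] injg cN dF]) (use orthg[OF g] e in simp)
      qed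
      show "\<exists>\<beta> :: nat \<Rightarrow> complex. inj_on \<beta> {..<N} \<and> \<beta> ` {..<N} \<inter> \<alpha> ` {..<K} = {} \<and>
               (\<forall>g<G. \<forall>j<d * (K - 1) + S + 1 - N. (\<Sum>k<K. w k * (\<Prod>n\<in>Ns g. \<alpha> k - \<beta> n) * \<alpha> k ^ j) = 0) \<and>
               cpa_feasible K d w \<alpha> \<beta> G Ns"
        using b'(1,2) orthg feas by blast
    qed
    show "let C = d * (K - 1) + S + 1 - N; \<I> = pattern_inter G Ns; I = card \<I>; L = N - S - I in
         ((\<exists>\<beta> :: nat \<Rightarrow> complex. inj_on \<beta> \<I> \<and> \<beta> ` \<I> \<inter> \<alpha> ` {..<K} = {} \<and>
             (\<forall>j < C + L. (\<Sum>k<K. w k * (\<Prod>n\<in>\<I>. \<alpha> k - \<beta> n) * \<alpha> k ^ j) = 0))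
          \<longleftrightarrow> I \<ge> Istar K d)
         \<and>
         (I \<ge> Istar K d \<longrightarrow>
            (\<exists>\<beta> :: nat \<Rightarrow> complex. inj_on \<beta> {..<N} \<and> \<beta> ` {..<N} \<inter> \<alpha> ` {..<K} = {} \<and>
               (\<forall>g<G. \<forall>j<C. (\<Sum>k<K. w k * (\<Prod>n\<in>Ns g. \<alpha> k - \<beta> n) * \<alpha> k ^ j) = 0) \<and>
               cpa_feasible K d w \<alpha> \<beta> G Ns))"
      unfolding Let_def II_def[symmetric] I_def[symmetric] using P1 P2 by blast
  qed
qed


end
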